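(* In the setting described in the context, with exact data $w^n=(v(t^n),u(t^n))$, under assumptions (A1), (A2) and the standing restrictions $0<\varepsilon\le\varepsilon_0<1$, $\Delta t\ge\varepsilon$, the approximation $$u_h^{n+1}=u^n+\Delta t\Big(\frac1\varepsilon\tilde v^n_x+\frac{1-\varepsilon}{\varepsilon^2}\frac{d}{dx}v_h^{n+1}+g^n\Big)$$ satisfies $\|u_h^{n+1}-u(t^{n+1})\|_{L^2}=O\big(\Delta t^2+\frac{\varepsilon^4}{\Delta x^2}+\varepsilon^2\big)$.
   Context: Setting. $\Omega=[0,1]$, $g$ given. $(v,u)$ solves $v_t-u_x=0$, $u_t-\varepsilon^{-2}v_x=g$ on $\Omega\times\mathbb{R}^+$ with $v=0$ on $\partial\Omega$. $t^n=n\Delta t$, superscript $n$ means evaluation at $t^n$. $\gamma=\Delta t^2(1-\varepsilon)^2/\varepsilon^2$, $a(v,\varphi)=\int_\Omega(\gamma v_x\varphi_x+v\varphi)dx$. Uniform mesh $\Omega_i=[x_i,x_{i+1}]$, $i=1,\dots,N_x$, width $\Delta x$, midpoints $\bar x_i$; $v_i^n=v(\bar x_i,t^n)$, $u_i^n=u(\bar x_i,t^n)$, $g_i^n=g(\bar x_i,t^n)$. On $\Omega_i$: $\tilde v^n_x=\frac1{2\Delta x}\big(v^n_{i+1}-v^n_{i-1}+\frac{\Delta x}{\Delta t}(u^n_{i+1}+u^n_{i-1}-2u^n_i)\big)$, $\tilde u^n_x=\frac1{2\Delta x}\big(u^n_{i+1}-u^n_{i-1}+\frac{\Delta x}{\Delta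 t}(v^n_{i+1}+v^n_{i-1}-2v^n_i)\big)$, $\iota_{1,h}=v_i^n+\Delta t\,\tilde u^n_x$, $\iota_{2,h}=g_i^n+\varepsilon^{-1}\tilde v^n_x$; $\iota_h(\varphi)=\int_\Omega\iota_{1,h}\varphi-\Delta t^2(1-\varepsilon)\iota_{2,h}\varphi_x\,dx$. $V_h$: continuous piecewise linear functions on the mesh vanishing at $0,1$; $v_h^{n+1}\in V_h$ solves $a(v_h^{n+1},\varphi_h)=\iota_h(\varphi_h)$ for all $\varphi_h\in V_h$. (A1) $u,v$ sufficiently smooth with $v=\varepsilon^2v^{(2)}+O(\varepsilon^3)$, $u_x=\varepsilon^2u^{(2)}_x+O(\varepsilon^3)$ in the norm $\|\varphi\|_{C^1}=\|\varphi\|_\infty+\|\nabla_{x,t}\varphi\|_\infty$, with $\varepsilon$-independent smooth $v^{(2)},u^{(2)}$. (A2) $\Delta t=\widehat{\mathrm{CFL}}\,\Delta x$ with fixed $0<\widehat{\mathrm{CFL}}<1$. $O(\cdot)$: bounded by a constant independent of $\varepsilon,\Delta t,\Delta x$ times the expression. *)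

theory Defs
  imports "HOL-Analysis.Analysis"
begin

text \<open>Functions of two real variables are written \<open>f x t\<close> (space first, time second).\<close>

definition px :: "(real \<Rightarrow> real \<Rightarrow> real) \<Rightarrow> real \<Rightarrow> real \<Rightarrow> real" where
  "px f = (\<lambda>x t. deriv (\<lambda>y. f y t) x)"

definition pt :: "(real \<Rightarrow> real \<Rightarrow> real) \<Rightarrow> real \<Rightarrow> real \<Rightarrow> real" where
  "pt f = (\<lambda>x t. deriv (\<lambda>s. f x s) t)"

fun Ck :: "nat \<Rightarrow> (real \<Rightarrow> real \<Rightarrow> real) \<Rightarrow> bool" where
  "Ck 0 f = continuous_on UNIV (\<lambda>p. f (fst p) (snd p))"
| "Ck (Suc k) f = ((\<forall>p. (\<lambda>q. f (fst q) (snd q)) differentiable (at p))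
                     \<and> Ck k (px f) \<and> Ck k (pt f))"

definition smooth2 :: "(real \<Rightarrow> real \<Rightarrow> real) \<Rightarrow> bool" where
  "smooth2 f \<longleftrightarrow> (\<forall>k. Ck k f)"

text \<open>Iterated partial derivatives: True = d/dx, False = d/dt.\<close>
fun pd :: "bool list \<Rightarrow> (real \<Rightarrow> real \<Rightarrow> real) \<Rightarrow> real \<Rightarrow> real \<Rightarrow> real" where
  "pd [] f = f"
| "pd (b # bs) f = (if b then px else pt) (pd bs f)"

definition bounded_derivs :: "(real \<Rightarrow> real \<Rightarrow> real) \<Rightarrow> bool" where
  "bounded_derivs f \<longleftrightarrow> (\<forall>ds. \<exists>B. \<forall>x t. 0 \<le> t \<longrightarrow> \<bar>pd ds f x t\<bar> \<le> B)"

text \<open>Cells \<open>\<Omega>_i = [x_i, x_{i+1}]\<close>, \<open>i = 1..N\<close>, \<open>x_i = (i-1) dx\<close>; midpoints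
  \<open>xbar_i = (i - 1/2) dx\<close> (i = 0 and i = N+1 are the ghost midpoints outside \<open>\<Omega>\<close>).\<close>
definition node :: "real \<Rightarrow> nat \<Rightarrow> real" where
  "node dx i = (real i - 1) * dx"

definition mid :: "real \<Rightarrow> nat \<Rightarrow> real" where
  "mid dx i = (real i - 1 / 2) * dx"

definition cell :: "real \<Rightarrow> real \<Rightarrow> nat" where
  "cell dx x = nat \<lfloor>x / dx\<rfloor> + 1"

definition vtx :: "real \<Rightarrow> real \<Rightarrow> (real \<Rightarrow> real \<Rightarrow> real) \<Rightarrow> (real \<Rightarrow> real \<Rightarrow> real)
                    \<Rightarrow> real \<Rightarrow> nat \<Rightarrow> real" where
  "vtx dt dx v u tn i = 1 / (2 * dx) *
     (v (mid dx (i + 1)) tn - v (mid dx (i - 1)) tn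
      + dx / dt * (u (mid dx (i + 1)) tn + u (mid dx (i - 1)) tn - 2 * u (mid dx i) tn))"

definition utx :: "real \<Rightarrow> real \<Rightarrow> (real \<Rightarrow> real \<Rightarrow> real) \<Rightarrow> (real \<Rightarrow> real \<Rightarrow> real)
                    \<Rightarrow> real \<Rightarrow> nat \<Rightarrow> real" where
  "utx dt dx v u tn i = 1 / (2 * dx) *
     (u (mid dx (i + 1)) tn - u (mid dx (i - 1)) tn
      + dx / dt * (v (mid dx (i + 1)) tn + v (mid dx (i - 1)) tn - 2 * v (mid dx i) tn))"

definition iota1 :: "real \<Rightarrow> real \<Rightarrow> (real \<Rightarrow> real \<Rightarrow> real) \<Rightarrow> (real \<Rightarrow> real \<Rightarrow> real)
                    \<Rightarrow> real \<Rightarrow> nat \<Rightarrow> real" where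
  "iota1 dt dx v u tn i = v (mid dx i) tn + dt * utx dt dx v u tn i"

definition iota2 :: "real \<Rightarrow> real \<Rightarrow> real \<Rightarrow> (real \<Rightarrow> real \<Rightarrow> real) \<Rightarrow> (real \<Rightarrow> real \<Rightarrow> real)
                    \<Rightarrow> (real \<Rightarrow> real \<Rightarrow> real) \<Rightarrow> real \<Rightarrow> nat \<Rightarrow> real" where
  "iota2 eps dt dx v u g tn i = g (mid dx i) tn + (1 / eps) * vtx dt dx v u tn i"

text \<open>\<open>V_h\<close>: continuous piecewise linear functions on the uniform mesh with N cells of
  [0,1], vanishing at 0 and 1 (only the restriction to [0,1] matters).\<close>
definition Vh :: "nat \<Rightarrow> (real \<Rightarrow> real) set" where
  "Vh N = {\<phi>. continuous_on {0..1} \<phi> \<and> \<phi> 0 = 0 \<and> \<phi> 1 = 0 \<and>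
              (\<forall>i\<in>{1..N}. \<exists>a b. \<forall>x\<in>{node (1 / real N) i..node (1 / real N) (Suc i)}.
                  \<phi> x = a * x + b)}"

definition gam :: "real \<Rightarrow> real \<Rightarrow> real" where
  "gam eps dt = dt\<^sup>2 * (1 - eps)\<^sup>2 / eps\<^sup>2"

definition aform :: "real \<Rightarrow> real \<Rightarrow> (real \<Rightarrow> real) \<Rightarrow> (real \<Rightarrow> real) \<Rightarrow> real" where
  "aform eps dt w \<phi> = integral {0..1} (\<lambda>x. gam eps dt * deriv w x * deriv \<phi> x + w x * \<phi> x)"

definition iota_h :: "real \<Rightarrow> real \<Rightarrow> real \<Rightarrow> (real \<Rightarrow> real \<Rightarrow> real) \<Rightarrow> (real \<Rightarrow> real \<Rightarrow> real)
                    \<Rightarrow> (real \<Rightarrow> real \<Rightarrow> real) \<Rightarrow> real \<Rightarrow> (real \<Rightarrow> real) \<Rightarrow> real" where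
  "iota_h eps dt dx v u g tn \<phi> = integral {0..1} (\<lambda>x.
      iota1 dt dx v u tn (cell dx x) * \<phi> x
      - dt\<^sup>2 * (1 - eps) * iota2 eps dt dx v u g tn (cell dx x) * deriv \<phi> x)"

text \<open>\<open>u_h^{n+1}\<close> built from exact data at \<open>t^n\<close> and the discrete \<open>v_h^{n+1}\<close>.\<close>
definition uh :: "real \<Rightarrow> real \<Rightarrow> real \<Rightarrow> (real \<Rightarrow> real \<Rightarrow> real) \<Rightarrow> (real \<Rightarrow> real \<Rightarrow> real)
                    \<Rightarrow> (real \<Rightarrow> real \<Rightarrow> real) \<Rightarrow> real \<Rightarrow> (real \<Rightarrow> real) \<Rightarrow> real \<Rightarrow> real" where
  "uh eps dt dx v u g tn vh x = u x tn + dt * ((1 / eps) * vtx dt dx v u tn (cell dx x)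
      + (1 - eps) / eps\<^sup>2 * deriv vh x + g x tn)"

definition L2norm01 :: "(real \<Rightarrow> real) \<Rightarrow> real" where
  "L2norm01 f = sqrt (integral {0..1} (\<lambda>x. (f x)\<^sup>2))"

end

theory Submission
  imports Defs
begin


lemma sm_Ck: "smooth2 f \<Longrightarrow> Ck k f" by (simp add: smooth2_def)

lemma sm_px: "smooth2 f \<Longrightarrow> smooth2 (px f)"
  unfolding smooth2_def by (metis Ck.simps(2))

lemma sm_pt: "smooth2 f \<Longrightarrow> smooth2 (pt f)"
  unfolding smooth2_def by (metis Ck.simps(2))

lemma sm_diff: "smooth2 f \<Longrightarrow> (\<lambda>q. f (fst q) (snd q)) differentiable (at p)"
  using sm_Ck[of f "Suc 0"] by (cases p) simp

lemma sm_dx: assumes "smooth2 f" shows "((\<lambda>y. f y t) has_real_derivative px f x t) (at x)"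
proof -
  have d1: "(\<lambda>y. (y, t)) differentiable (at x)" by simp
  have "((\<lambda>q. f (fst q) (snd q)) \<circ> (\<lambda>y. (y, t))) differentiable (at x)"
    by (rule differentiable_chain_at[OF d1 sm_diff[OF assms]])
  hence "(\<lambda>y. f y t) differentiable (at x)" by (simp add: o_def)
  thus ?thesis unfolding px_def using DERIV_deriv_iff_real_differentiable by blast
qed

lemma sm_dt: assumes "smooth2 f" shows "((\<lambda>s. f x s) has_real_derivative pt f x t) (at t)"
proof -
  have d1: "(\<lambda>s. (x, s)) differentiable (at t)" by simp
  have "((\<lambda>q. f (fst q) (snd q)) \<circ> (\<lambda>s. (x, s))) differentiable (at t)"
    by (rule differentiable_chain_at[OF d1 sm_diff[OF assms]])
  hence "(\<lambda>s. f x s) differentiable (at t)" by (simp add: o_def)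
  thus ?thesis unfolding pt_def using DERIV_deriv_iff_real_differentiable by blast
qed

lemma mvt_ex:
  fixes f f' :: "real \<Rightarrow> real"
  assumes "\<And>y. DERIV f y :> f' y"
  shows "\<exists>z. min a b \<le> z \<and> z \<le> max a b \<and> f b - f a = (b - a) * f' z"
proof (cases "a < b")
  case True
  from MVT2[OF True assms] obtain z where "a < z" "z < b" "f b - f a = (b - a) * f' z" by blast
  thus ?thesis using True by (intro exI[of _ z]) auto
next
  case False
  show ?thesis
  proof (cases "b < a")
    case True
    from MVT2[OF True assms] obtain z where "b < z" "z < a" "f a - f b = (a - b) * f' z" by blast
    thus ?thesis using True by (intro exI[of _ z]) (auto simp: algebra_simps)
  next
    case False
    with \<open>\<not> a < b\<close> have "a = b" by simp
    thus ?thesis by (intro exI[of _ a]) auto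
  qed
qed

lemma mvt_bound:
  fixes f f' :: "real \<Rightarrow> real"
  assumes "\<And>y. DERIV f y :> f' y" "\<And>y. min a b \<le> y \<Longrightarrow> y \<le> max a b \<Longrightarrow> \<bar>f' y\<bar> \<le> M"
  shows "\<bar>f b - f a\<bar> \<le> M * \<bar>b - a\<bar>"
proof -
  obtain z where z: "min a b \<le> z" "z \<le> max a b" "f b - f a = (b - a) * f' z"
    using mvt_ex[OF assms(1)] by blast
  have "\<bar>f b - f a\<bar> = \<bar>b - a\<bar> * \<bar>f' z\<bar>" using z(3) by (simp only: abs_mult)
  also have "\<dots> \<le> \<bar>b - a\<bar> * M" using assms(2)[OF z(1,2)] by (simp add: mult_left_mono)
  finally show ?thesis by (simp add: mult.commute)
qed

lemma lip2:
  assumes "smooth2 f" "\<And>x t. 0 \<le> t \<Longrightarrow> \<bar>px f x t\<bar> \<le> M" "\<And>x t. 0 \<le> t \<Longrightarrow> \<bar>pt f x t\<bar> \<le> M"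
    "0 \<le> t" "0 \<le> s"
  shows "\<bar>f x t - f y s\<bar> \<le> M * (\<bar>x - y\<bar> + \<bar>t - s\<bar>)"
proof -
  have 1: "\<bar>f x t - f y t\<bar> \<le> M * \<bar>x - y\<bar>"
    using mvt_bound[of "\<lambda>z. f z t" "\<lambda>z. px f z t" y x M] sm_dx[OF assms(1)] assms(2)[OF assms(4)] by blast
  have 2: "\<bar>f y t - f y s\<bar> \<le> M * \<bar>t - s\<bar>"
  proof (rule mvt_bound[of "\<lambda>z. f y z" "\<lambda>z. pt f y z" s t M])
    show "\<And>z. ((\<lambda>z. f y z) has_real_derivative pt f y z) (at z)" using sm_dt[OF assms(1)] by blast
    fix z assume "min s t \<le> z" "z \<le> max s t"
    hence "0 \<le> z" using assms(4,5) by linarith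
    thus "\<bar>pt f y z\<bar> \<le> M" using assms(3) by blast
  qed
  show ?thesis using 1 2 by (simp add: distrib_left)
qed




lemma node_Suc: "node h (Suc i) = node h i + h"
  by (simp add: node_def algebra_simps)

lemma cell_eq:
  assumes "0 < h" "1 \<le> i" "node h i < x" "x < node h (Suc i)"
  shows "cell h x = i"
proof -
  have a: "real i - 1 < x / h" using assms by (simp add: node_def field_simps)
  have b: "x / h < real i" using assms by (simp add: node_def field_simps)
  have "\<lfloor>x / h\<rfloor> = int i - 1"
    using a b by (subst floor_eq_iff) (simp add: of_nat_diff)
  thus ?thesis using assms(2) unfolding cell_def by simp
qed

definition SN :: "nat \<Rightarrow> real set" where
  "SN N = (\<lambda>k. real k / real N) ` {..N}"

lemma finite_SN: "finite (SN N)" by (simp add: SN_def)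

lemma cover:
  assumes "1 \<le> N" "0 \<le> x" "x \<le> 1" "x \<notin> SN N"
  shows "\<exists>i\<in>{1..N}. node (1 / real N) i < x \<and> x < node (1 / real N) (Suc i)"
proof -
  define k where "k = nat \<lfloor>x * N\<rfloor>"
  have xN: "0 \<le> x * N" using assms by simp
  have k1: "real k \<le> x * N" using xN unfolding k_def by linarith
  have k2: "x * N < real k + 1" using xN unfolding k_def by linarith
  have kn: "real k \<noteq> x * N"
  proof
    assume "real k = x * N"
    hence "x = real k / real N" using assms(1) by (simp add: field_simps)
    moreover have "k \<le> N"
    proof -
      have "x * N \<le> N" using assms by simp
      thus ?thesis using \<open>real k = x * N\<close> by linarith
    qed
    ultimately show False using assms(4) unfolding SN_def by auto
  qed
  have k3: "real k < x * N" using k1 kn by simp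
  have kN: "k < N"
  proof (rule ccontr)
    assume "\<not> k < N" hence "real N \<le> real k" by simp
    hence "real N < x * N" using k3 by simp
    hence "1 < x" using assms(1) by (simp add: mult_less_cancel_right2)
    thus False using assms(3) by simp
  qed
  show ?thesis
  proof (rule bexI[of _ "Suc k"])
    show "Suc k \<in> {1..N}" using kN by simp
    show "node (1 / real N) (Suc k) < x \<and> x < node (1 / real N) (Suc (Suc k))"
      using k3 k2 assms(1) by (simp add: node_def field_simps)
  qed
qed

definition ocell :: "nat \<Rightarrow> nat \<Rightarrow> real set" where
  "ocell N i = {node (1 / real N) i <..< node (1 / real N) (Suc i)}"

definition pw :: "nat \<Rightarrow> (real \<Rightarrow> real) \<Rightarrow> bool" where
  "pw N f \<longleftrightarrow> (\<forall>i\<in>{1..N}. \<exists>g. continuous_on {node (1 / real N) i..node (1 / real N) (Suc i)} g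
        \<and> (\<forall>x\<in>ocell N i. f x = g x))"

lemma pw_integrable:
  assumes "1 \<le> N" "pw N f"
  shows "f integrable_on {0..1}"
proof -
  have "k \<le> N \<Longrightarrow> f integrable_on {0..real k / real N}" for k
  proof (induction k)
    case 0
    then show ?case using integrable_on_refl[of f 0] by simp
  next
    case (Suc k)
    hence "Suc k \<in> {1..N}" by simp
    then obtain g where g: "continuous_on {node (1 / real N) (Suc k)..node (1 / real N) (Suc (Suc k))} g"
        "\<forall>x\<in>ocell N (Suc k). f x = g x" using assms(2) unfolding pw_def by blast
    have e1: "node (1 / real N) (Suc k) = real k / real N" by (simp add: node_def)
    have e2: "node (1 / real N) (Suc (Suc k)) = real (Suc k) / real N" by (simp add: node_def)
    have gi: "g integrable_on cbox (real k / real N) (real (Suc k) / real N)"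
      using integrable_continuous_interval[OF g(1)] by (simp add: e1 e2)
    have fi: "f integrable_on cbox (real k / real N) (real (Suc k) / real N)"
      by (rule integrable_spike_interior[OF _ gi]) (use g(2) in \<open>auto simp: ocell_def e1 e2\<close>)
    show ?case
      by (rule Henstock_Kurzweil_Integration.integrable_combine[of 0 "real k / real N"])
        (use Suc fi in \<open>auto simp: divide_right_mono cbox_interval\<close>)
  qed
  from this[of N] show ?thesis using assms(1) by simp
qed

lemma pw_add: "pw N f \<Longrightarrow> pw N g \<Longrightarrow> pw N (\<lambda>x. f x + g x)"
  unfolding pw_def
  by (metis (no_types, lifting) continuous_on_add)

lemma pw_diff: "pw N f \<Longrightarrow> pw N g \<Longrightarrow> pw N (\<lambda>x. f x - g x)"
  unfolding pw_def
  by (metis (no_types, lifting) continuous_on_diff)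

lemma pw_mult: "pw N f \<Longrightarrow> pw N g \<Longrightarrow> pw N (\<lambda>x. f x * g x)"
  unfolding pw_def
  by (metis (no_types, lifting) continuous_on_mult)

lemma pw_const: "pw N (\<lambda>x. c)"
  unfolding pw_def by (auto intro!: exI[of _ "\<lambda>x. c"])

lemma pw_cont: "continuous_on UNIV f \<Longrightarrow> pw N f"
  unfolding pw_def by (metis continuous_on_subset subset_UNIV)

lemma pw_cell: "pw N (\<lambda>x. c (cell (1 / real N) x))"
  unfolding pw_def
proof
  fix i assume i: "i \<in> {1..N}"
  show "\<exists>g. continuous_on {node (1 / real N) i..node (1 / real N) (Suc i)} g \<and>
            (\<forall>x\<in>ocell N i. c (cell (1 / real N) x) = g x)"
  proof (rule exI[of _ "\<lambda>x. c i"], intro conjI ballI)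
    fix x assume "x \<in> ocell N i"
    thus "c (cell (1 / real N) x) = c i"
      using i by (subst cell_eq) (auto simp: ocell_def)
  qed simp
qed

lemma Vh_affine:
  assumes "\<phi> \<in> Vh N" "i \<in> {1..N}"
  obtains a b where "\<And>x. x \<in> {node (1 / real N) i..node (1 / real N) (Suc i)} \<Longrightarrow> \<phi> x = a * x + b"
  using assms unfolding Vh_def by blast

lemma affine_deriv:
  assumes "\<And>y. y \<in> {p..q} \<Longrightarrow> f y = a * y + b" "p < x" "x < q"
  shows "(f has_real_derivative a) (at x)"
proof -
  have "((\<lambda>y. a * y + b) has_real_derivative a) (at x)"
    by (auto intro!: derivative_eq_intros)
  thus ?thesis
    by (rule has_field_derivative_transform_within_open[of _ _ _ "{p<..<q}"]) (use assms in auto)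
qed

lemma Vh_deriv:
  assumes "\<phi> \<in> Vh N" "i \<in> {1..N}" "x \<in> ocell N i"
  shows "(\<phi> has_real_derivative deriv \<phi> x) (at x)"
proof -
  obtain a b where ab: "\<And>x. x \<in> {node (1 / real N) i..node (1 / real N) (Suc i)} \<Longrightarrow> \<phi> x = a * x + b"
    using Vh_affine[OF assms(1,2)] by blast
  have "(\<phi> has_real_derivative a) (at x)"
    by (rule affine_deriv[OF ab]) (use assms(3) in \<open>auto simp: ocell_def\<close>)
  thus ?thesis using DERIV_imp_deriv by metis
qed

lemma pw_Vh: assumes "\<phi> \<in> Vh N" shows "pw N \<phi>"
  unfolding pw_def
proof
  fix i assume i: "i \<in> {1..N}"
  obtain a b where ab: "\<And>x. x \<in> {node (1 / real N) i..node (1 / real N) (Suc i)} \<Longrightarrow> \<phi> x = a * x + b"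
    using Vh_affine[OF assms i] by blast
  show "\<exists>g. continuous_on {node (1 / real N) i..node (1 / real N) (Suc i)} g \<and> (\<forall>x\<in>ocell N i. \<phi> x = g x)"
    by (rule exI[of _ "\<lambda>x. a * x + b"]) (auto simp: ocell_def ab intro!: continuous_intros)
qed

lemma pw_deriv_Vh: assumes "\<phi> \<in> Vh N" shows "pw N (deriv \<phi>)"
  unfolding pw_def
proof
  fix i assume i: "i \<in> {1..N}"
  obtain a b where ab: "\<And>x. x \<in> {node (1 / real N) i..node (1 / real N) (Suc i)} \<Longrightarrow> \<phi> x = a * x + b"
    using Vh_affine[OF assms i] by blast
  have "\<forall>x\<in>ocell N i. deriv \<phi> x = a"
  proof
    fix x assume "x \<in> ocell N i"
    hence "(\<phi> has_real_derivative a) (at x)"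
      by (intro affine_deriv[OF ab]) (auto simp: ocell_def)
    thus "deriv \<phi> x = a" by (rule DERIV_imp_deriv)
  qed
  thus "\<exists>g. continuous_on {node (1 / real N) i..node (1 / real N) (Suc i)} g \<and> (\<forall>x\<in>ocell N i. deriv \<phi> x = g x)"
    by (intro exI[of _ "\<lambda>x. a"]) auto
qed

lemma ae_cell:
  assumes "1 \<le> N" "x \<in> {0..1} - SN N"
  shows "\<exists>i\<in>{1..N}. x \<in> ocell N i"
  using cover[OF assms(1)] assms(2) unfolding ocell_def by auto

lemma Vh_int_deriv:
  assumes "1 \<le> N" "\<phi> \<in> Vh N"
  shows "(deriv \<phi> has_integral 0) {0..1}"
proof -
  have "(deriv \<phi> has_integral (\<phi> 1 - \<phi> 0)) {0..1}"
  proof (rule fundamental_theorem_of_calculus_strong[OF finite_SN[of N]])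
    show "continuous_on {0..1} \<phi>" using assms(2) unfolding Vh_def by blast
    fix x assume "x \<in> {0..1} - SN N"
    then obtain i where "i \<in> {1..N}" "x \<in> ocell N i" using ae_cell[OF assms(1)] by blast
    thus "(\<phi> has_vector_derivative deriv \<phi> x) (at x)"
      using Vh_deriv[OF assms(2)] has_real_derivative_iff_has_vector_derivative by blast
  qed simp
  thus ?thesis using assms(2) unfolding Vh_def by simp
qed

lemma Vh_diff: assumes "\<phi> \<in> Vh N" "\<psi> \<in> Vh N" shows "(\<lambda>x. \<phi> x - \<psi> x) \<in> Vh N"
proof -
  have "\<forall>i\<in>{1..N}. \<exists>a b. \<forall>x\<in>{node (1 / real N) i..node (1 / real N) (Suc i)}. \<phi> x - \<psi> x = a * x + b"
  proof
    fix i assume i: "i \<in> {1..N}"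
    obtain a b where ab: "\<And>x. x \<in> {node (1 / real N) i..node (1 / real N) (Suc i)} \<Longrightarrow> \<phi> x = a * x + b"
      using Vh_affine[OF assms(1) i] by blast
    obtain c d where cd: "\<And>x. x \<in> {node (1 / real N) i..node (1 / real N) (Suc i)} \<Longrightarrow> \<psi> x = c * x + d"
      using Vh_affine[OF assms(2) i] by blast
    show "\<exists>a b. \<forall>x\<in>{node (1 / real N) i..node (1 / real N) (Suc i)}. \<phi> x - \<psi> x = a * x + b"
      by (rule exI[of _ "a - c"], rule exI[of _ "b - d"]) (auto simp: ab cd algebra_simps)
  qed
  thus ?thesis using assms unfolding Vh_def by (auto intro!: continuous_intros)
qed




definition interp :: "nat \<Rightarrow> (real \<Rightarrow> real) \<Rightarrow> real \<Rightarrow> real" where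
  "interp N V y = (\<Sum>j\<in>{1..N}. (V (node (1 / real N) (Suc j)) - V (node (1 / real N) j))
                      * min 1 (max 0 ((y - node (1 / real N) j) * real N)))"

lemma node1: "node h (Suc 0) = 0" by (simp add: node_def)

lemma interp_cell:
  assumes N: "1 \<le> N" and i: "i \<in> {1..N}" and y: "node (1 / real N) i \<le> y" "y \<le> node (1 / real N) (Suc i)"
    and V0: "V 0 = 0"
  shows "interp N V y = V (node (1 / real N) i)
           + (y - node (1 / real N) i) * real N * (V (node (1 / real N) (Suc i)) - V (node (1 / real N) i))"
proof -
  let ?n = "node (1 / real N)"
  let ?d = "\<lambda>j. V (?n (Suc j)) - V (?n j)"
  let ?r = "\<lambda>j. min 1 (max 0 ((y - ?n j) * real N))"
  have Npos: "0 < real N" using N by simp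
  have nd: "\<And>j. ?n j = (real j - 1) / real N" by (simp add: node_def)
  have r1: "?r j = 1" if "j < i" for j
  proof -
    have "real j + 1 \<le> real i" using that by simp
    hence "1 \<le> (y - ?n j) * real N" using y(1) Npos by (simp add: nd field_simps)
    thus ?thesis by simp
  qed
  have r0: "?r j = 0" if "i < j" for j
  proof -
    have "real i + 1 \<le> real j" using that by simp
    moreover have "y * real N \<le> real i" using y(2) Npos by (simp add: nd field_simps)
    moreover have "(y - ?n j) * real N = y * real N - (real j - 1)" using Npos by (simp add: nd field_simps)
    ultimately have "(y - ?n j) * real N \<le> 0" by linarith
    thus ?thesis by simp
  qed
  have ri: "?r i = (y - ?n i) * real N"
  proof -
    have "0 \<le> (y - ?n i) * real N" using y(1) Npos by simp
    moreover have "(y - ?n i) * real N \<le> 1" using y(2) Npos by (simp add: nd field_simps)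
    ultimately show ?thesis by simp
  qed
  have split: "{1..N} = {1..<i} \<union> insert i {i<..N}" using i by auto
  have "interp N V y = (\<Sum>j\<in>{1..<i}. ?d j * ?r j) + ?d i * ?r i + (\<Sum>j\<in>{i<..N}. ?d j * ?r j)"
    unfolding interp_def split
    by (subst sum.union_disjoint) (auto simp: sum.insert)
  also have "(\<Sum>j\<in>{1..<i}. ?d j * ?r j) = (\<Sum>j\<in>{1..<i}. ?d j)" by (rule sum.cong) (auto simp: r1)
  also have "\<dots> = V (?n i) - V (?n 1)" using i by (subst sum_Suc_diff') auto
  also have "(\<Sum>j\<in>{i<..N}. ?d j * ?r j) = 0" by (rule sum.neutral) (auto simp: r0)
  finally have "interp N V y = V (?n i) - V (?n 1) + ?d i * ?r i + 0" .
  thus ?thesis unfolding ri using V0 by (simp add: node1 algebra_simps)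
qed

lemma interp_Vh:
  assumes N: "1 \<le> N" and V0: "V 0 = 0" and V1: "V 1 = 0"
  shows "interp N V \<in> Vh N"
proof -
  have c: "continuous_on {0..1} (interp N V)"
    unfolding interp_def by (intro continuous_intros)
  have z0: "interp N V 0 = 0"
    using interp_cell[OF N, of 1 0 V] N V0 by (simp add: node1 node_def)
  have nN: "node (1 / real N) (Suc N) = 1" "node (1 / real N) N \<le> 1" using N by (auto simp: node_def field_simps)
  have z1: "interp N V 1 = 0"
    using interp_cell[OF N, of N 1 V] N V0 V1 nN by (simp add: node_def field_simps)
  have aff: "\<forall>i\<in>{1..N}. \<exists>a b. \<forall>x\<in>{node (1 / real N) i..node (1 / real N) (Suc i)}. interp N V x = a * x + b"
  proof
    fix i assume i: "i \<in> {1..N}"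
    let ?n = "node (1 / real N)"
    show "\<exists>a b. \<forall>x\<in>{?n i..?n (Suc i)}. interp N V x = a * x + b"
      by (rule exI[of _ "real N * (V (?n (Suc i)) - V (?n i))"],
          rule exI[of _ "V (?n i) - ?n i * real N * (V (?n (Suc i)) - V (?n i))"])
         (use interp_cell[OF N i, where V=V] V0 in \<open>auto simp: algebra_simps\<close>)
  qed
  show ?thesis unfolding Vh_def using c z0 z1 aff by blast
qed

lemma interp_deriv:
  assumes N: "1 \<le> N" and i: "i \<in> {1..N}" and x: "x \<in> ocell N i" and V0: "V 0 = 0"
  shows "deriv (interp N V) x = real N * (V (node (1 / real N) (Suc i)) - V (node (1 / real N) i))"
proof -
  let ?n = "node (1 / real N)"
  have "(interp N V has_real_derivative real N * (V (?n (Suc i)) - V (?n i))) (at x)"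
    by (rule affine_deriv[where b = "V (?n i) - ?n i * real N * (V (?n (Suc i)) - V (?n i))"])
       (use x interp_cell[OF N i, where V=V] V0 in \<open>auto simp: algebra_simps ocell_def\<close>)
  thus ?thesis by (rule DERIV_imp_deriv)
qed




lemma sm_cont_x: "smooth2 f \<Longrightarrow> continuous_on UNIV (\<lambda>y. f y t)"
proof -
  assume "smooth2 f"
  hence "\<And>x. isCont (\<lambda>y. f y t) x" using sm_dx DERIV_isCont by blast
  thus ?thesis by (simp add: continuous_at_imp_continuous_on)
qed

lemma sdiff:
  fixes f f' :: "real \<Rightarrow> real"
  assumes d: "\<And>y. DERIV f y :> f' y" and k: "0 \<le> k"
    and D: "\<And>y z. \<bar>y - a\<bar> \<le> k \<Longrightarrow> \<bar>z - a\<bar> \<le> k \<Longrightarrow> \<bar>f' y - f' z\<bar> \<le> D"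
  shows "\<bar>f (a + k) + f (a - k) - 2 * f a\<bar> \<le> k * D"
proof -
  obtain z1 where z1: "min a (a + k) \<le> z1" "z1 \<le> max a (a + k)" "f (a + k) - f a = (a + k - a) * f' z1"
    using mvt_ex[OF d] by blast
  obtain z2 where z2: "min (a - k) a \<le> z2" "z2 \<le> max (a - k) a" "f a - f (a - k) = (a - (a - k)) * f' z2"
    using mvt_ex[OF d] by blast
  have "f (a + k) + f (a - k) - 2 * f a = k * (f' z1 - f' z2)"
    using z1(3) z2(3) by (simp add: algebra_simps)
  moreover have "\<bar>f' z1 - f' z2\<bar> \<le> D" using z1 z2 k by (intro D) auto
  ultimately show ?thesis using k by (simp add: abs_mult mult_left_mono)
qed

lemma young1: "(a::real) * x - x\<^sup>2 \<le> a\<^sup>2 / 4"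
proof -
  have "0 \<le> (x - a / 2)\<^sup>2" by simp
  thus ?thesis by (simp add: power2_eq_square algebra_simps)
qed

lemma young2: assumes "(g::real) > 0" shows "- b * y - g / 2 * y\<^sup>2 \<le> b\<^sup>2 / (2 * g)"
proof -
  have "0 \<le> (g * y + b)\<^sup>2" by simp
  hence "0 \<le> g\<^sup>2 * y\<^sup>2 + 2 * g * b * y + b\<^sup>2" by (simp add: power2_eq_square algebra_simps)
  hence "2 * g * (- b * y - g / 2 * y\<^sup>2) \<le> b\<^sup>2" by (simp add: power2_eq_square algebra_simps)
  thus ?thesis using assms by (simp add: field_simps)
qed

locale S =
  fixes e h dt t K M CFL e0 :: real and N :: nat and v u g v2 u2 :: "real \<Rightarrow> real \<Rightarrow> real"
  assumes e: "0 < e" "e \<le> e0" "e0 < 1"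
  and C: "0 < CFL" "CFL < 1"
  and N: "1 \<le> N" and h: "h = 1 / real N" and dt: "dt = CFL * h" and edt: "e \<le> dt" and t: "0 \<le> t"
  and sm: "smooth2 v" "smooth2 u" "smooth2 g" "smooth2 v2" "smooth2 u2"
  and pde: "\<And>x s. 0 < x \<Longrightarrow> x < 1 \<Longrightarrow> 0 < s \<Longrightarrow> pt v x s = px u x s \<and> pt u x s = px v x s / e\<^sup>2 + g x s"
  and bc: "\<And>s. 0 \<le> s \<Longrightarrow> v 0 s = 0 \<and> v 1 s = 0"
  and K: "0 \<le> K" and M: "0 \<le> M"
  and Bv: "\<And>x s. 0 \<le> s \<Longrightarrow> \<bar>px (px v2) x s\<bar> \<le> M \<and> \<bar>pt (px v2) x s\<bar> \<le> M \<and> \<bar>px v2 x s\<bar> \<le> M"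
  and Bu: "\<And>x s. 0 \<le> s \<Longrightarrow> \<bar>px (px u2) x s\<bar> \<le> M \<and> \<bar>pt (px u2) x s\<bar> \<le> M \<and> \<bar>px u2 x s\<bar> \<le> M"
  and Bg: "\<And>x s. 0 \<le> s \<Longrightarrow> \<bar>px g x s\<bar> \<le> M \<and> \<bar>pt g x s\<bar> \<le> M"
  and Av: "\<And>x s. 0 \<le> s \<Longrightarrow> \<bar>px v x s - e\<^sup>2 * px v2 x s\<bar> \<le> K * e ^ 3"
  and Au: "\<And>x s. 0 \<le> s \<Longrightarrow> \<bar>px u x s - e\<^sup>2 * px u2 x s\<bar> \<le> K * e ^ 3"
begin

lemma hpos: "0 < h" using N h by simp
lemma dtpos: "0 < dt" using dt C hpos by simp
lemma h_le1: "h \<le> 1" using N h by simp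
lemma dt_le_h: "dt \<le> h" using dt C hpos by (simp add: mult_left_le_one_le)
lemma e_le1: "e \<le> 1" using e by simp
lemma h_eq: "h = dt / CFL" using dt C by simp
lemma e3: "e ^ 3 \<le> e\<^sup>2 * dt"
proof -
  have "e ^ 3 = e\<^sup>2 * e" by (simp add: power3_eq_cube power2_eq_square)
  also have "\<dots> \<le> e\<^sup>2 * dt" using edt by (simp add: mult_left_mono)
  finally show ?thesis .
qed
lemma e3': "e ^ 3 \<le> e\<^sup>2"
proof -
  have "e ^ 3 = e\<^sup>2 * e" by (simp add: power3_eq_cube power2_eq_square)
  also have "\<dots> \<le> e\<^sup>2 * 1" using e_le1 by (intro mult_left_mono) auto
  finally show ?thesis by simp
qed
lemma e2_le_dt: "e\<^sup>2 \<le> dt"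
proof -
  have "e\<^sup>2 \<le> e * 1" using e_le1 e by (simp add: power2_eq_square mult_left_mono)
  thus ?thesis using edt by simp
qed

lemma vx_bd: assumes "0 \<le> s" shows "\<bar>px v x s\<bar> \<le> e\<^sup>2 * (M + K)"
proof -
  have "\<bar>e\<^sup>2 * px v2 x s\<bar> \<le> e\<^sup>2 * M" using Bv[OF assms] by (simp add: abs_mult mult_left_mono)
  moreover have "K * e ^ 3 \<le> K * e\<^sup>2" using e3' K by (simp add: mult_left_mono)
  ultimately show ?thesis using Av[OF assms, of x] by (simp add: algebra_simps)
qed

lemma ux_bd: assumes "0 \<le> s" shows "\<bar>px u x s\<bar> \<le> e\<^sup>2 * (M + K)"
proof -
  have "\<bar>e\<^sup>2 * px u2 x s\<bar> \<le> e\<^sup>2 * M" using Bu[OF assms] by (simp add: abs_mult mult_left_mono)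
  moreover have "K * e ^ 3 \<le> K * e\<^sup>2" using e3' K by (simp add: mult_left_mono)
  ultimately show ?thesis using Au[OF assms, of x] by (simp add: algebra_simps)
qed

lemma vx_diff: assumes "0 \<le> s" "0 \<le> s'"
  shows "\<bar>px v x s - px v y s'\<bar> \<le> 2 * K * e ^ 3 + e\<^sup>2 * (M * (\<bar>x - y\<bar> + \<bar>s - s'\<bar>))"
proof -
  have l: "\<bar>px v2 x s - px v2 y s'\<bar> \<le> M * (\<bar>x - y\<bar> + \<bar>s - s'\<bar>)"
    by (rule lip2[OF sm_px[OF sm(4)]]) (use Bv assms in auto)
  have "\<bar>e\<^sup>2 * px v2 x s - e\<^sup>2 * px v2 y s'\<bar> \<le> e\<^sup>2 * (M * (\<bar>x - y\<bar> + \<bar>s - s'\<bar>))"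
    using l by (simp add: abs_mult mult_left_mono flip: right_diff_distrib)
  thus ?thesis using Av[OF assms(1), of x] Av[OF assms(2), of y] by (simp add: abs_le_iff)
qed

lemma ux_diff: assumes "0 \<le> s" "0 \<le> s'"
  shows "\<bar>px u x s - px u y s'\<bar> \<le> 2 * K * e ^ 3 + e\<^sup>2 * (M * (\<bar>x - y\<bar> + \<bar>s - s'\<bar>))"
proof -
  have l: "\<bar>px u2 x s - px u2 y s'\<bar> \<le> M * (\<bar>x - y\<bar> + \<bar>s - s'\<bar>)"
    by (rule lip2[OF sm_px[OF sm(5)]]) (use Bu assms in auto)
  have "\<bar>e\<^sup>2 * px u2 x s - e\<^sup>2 * px u2 y s'\<bar> \<le> e\<^sup>2 * (M * (\<bar>x - y\<bar> + \<bar>s - s'\<bar>))"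
    using l by (simp add: abs_mult mult_left_mono flip: right_diff_distrib)
  thus ?thesis using Au[OF assms(1), of x] Au[OF assms(2), of y] by (simp add: abs_le_iff)
qed

end



context S begin

lemma mid_Suc: "mid h (i + 1) = mid h i + h" by (simp add: mid_def algebra_simps)
lemma mid_pred: "1 \<le> i \<Longrightarrow> mid h (i - 1) = mid h i - h" by (simp add: mid_def of_nat_diff algebra_simps)

lemma cellx:
  assumes i: "i \<in> {1..N}" and x: "x \<in> ocell N i"
  shows "0 < x" "x < 1" "\<bar>x - mid h i\<bar> \<le> h / 2" "node h i < x" "x < node h i + h" "cell h x = i"
proof -
  have x1: "node h i < x" "x < node h (Suc i)" using x h by (auto simp: ocell_def)
  show "node h i < x" using x1 by simp
  show "x < node h i + h" using x1 node_Suc by simp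
  have "0 \<le> node h i" using i hpos by (simp add: node_def)
  thus "0 < x" using x1 by simp
  have "h * real i \<le> h * real N" using i hpos by (intro mult_left_mono) auto
  hence "node h (Suc i) \<le> 1" using i h N by (simp add: node_def)
  thus "x < 1" using x1 by simp
  have "x - mid h i \<le> h / 2" "mid h i - x \<le> h / 2" using x1 by (simp_all add: node_def mid_def algebra_simps)
  thus "\<bar>x - mid h i\<bar> \<le> h / 2" by linarith
  show "cell h x = i" using cell_eq[OF hpos _ x1] i by simp
qed

lemma sd_v: assumes "0 \<le> s" shows "\<bar>v (m + h) s + v (m - h) s - 2 * v m s\<bar> \<le> 2 * h * (e\<^sup>2 * (K + M))"
proof -
  have "\<bar>v (m + h) s + v (m - h) s - 2 * v m s\<bar> \<le> h * (2 * K * e ^ 3 + e\<^sup>2 * (M * (2 * h + \<bar>s - s\<bar>)))"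
  proof (rule sdiff[of "\<lambda>y. v y s" "\<lambda>y. px v y s"])
    show "\<And>y. ((\<lambda>y. v y s) has_real_derivative px v y s) (at y)" using sm_dx[OF sm(1)] by blast
    show "0 \<le> h" using hpos by simp
    fix y z assume "\<bar>y - m\<bar> \<le> h" "\<bar>z - m\<bar> \<le> h"
    hence "\<bar>y - z\<bar> \<le> 2 * h" by simp
    hence "e\<^sup>2 * (M * (\<bar>y - z\<bar> + \<bar>s - s\<bar>)) \<le> e\<^sup>2 * (M * (2 * h + \<bar>s - s\<bar>))"
      using M by (simp add: mult_left_mono)
    thus "\<bar>px v y s - px v z s\<bar> \<le> 2 * K * e ^ 3 + e\<^sup>2 * (M * (2 * h + \<bar>s - s\<bar>))"
      using vx_diff[OF assms assms, of y z] by simp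
  qed
  also have "\<dots> \<le> h * (2 * K * e\<^sup>2 + e\<^sup>2 * (M * 2))"
  proof -
    have a: "2 * K * e ^ 3 \<le> 2 * K * e\<^sup>2" using e3' K by (simp add: mult_left_mono)
    have b: "e\<^sup>2 * (M * (2 * h + \<bar>s - s\<bar>)) \<le> e\<^sup>2 * (M * 2)"
    proof -
      have "M * (2 * h + \<bar>s - s\<bar>) \<le> M * 2" using h_le1 M by (simp add: mult_left_mono)
      thus ?thesis by (rule mult_left_mono) simp
    qed
    from add_mono[OF a b] have "2 * K * e ^ 3 + e\<^sup>2 * (M * (2 * h + \<bar>s - s\<bar>)) \<le> 2 * K * e\<^sup>2 + e\<^sup>2 * (M * 2)" .
    thus ?thesis using hpos by (intro mult_left_mono) auto
  qed
  finally show ?thesis by (simp add: algebra_simps)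
qed

lemma sd_u: assumes "0 \<le> s" shows "\<bar>u (m + h) s + u (m - h) s - 2 * u m s\<bar> \<le> 2 * h * (e\<^sup>2 * (K + M))"
proof -
  have "\<bar>u (m + h) s + u (m - h) s - 2 * u m s\<bar> \<le> h * (2 * K * e ^ 3 + e\<^sup>2 * (M * (2 * h + \<bar>s - s\<bar>)))"
  proof (rule sdiff[of "\<lambda>y. u y s" "\<lambda>y. px u y s"])
    show "\<And>y. ((\<lambda>y. u y s) has_real_derivative px u y s) (at y)" using sm_dx[OF sm(2)] by blast
    show "0 \<le> h" using hpos by simp
    fix y z assume "\<bar>y - m\<bar> \<le> h" "\<bar>z - m\<bar> \<le> h"
    hence "\<bar>y - z\<bar> \<le> 2 * h" by simp
    hence "e\<^sup>2 * (M * (\<bar>y - z\<bar> + \<bar>s - s\<bar>)) \<le> e\<^sup>2 * (M * (2 * h + \<bar>s - s\<bar>))"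
      using M by (simp add: mult_left_mono)
    thus "\<bar>px u y s - px u z s\<bar> \<le> 2 * K * e ^ 3 + e\<^sup>2 * (M * (2 * h + \<bar>s - s\<bar>))"
      using ux_diff[OF assms assms, of y z] by simp
  qed
  also have "\<dots> \<le> h * (2 * K * e\<^sup>2 + e\<^sup>2 * (M * 2))"
  proof -
    have a: "2 * K * e ^ 3 \<le> 2 * K * e\<^sup>2" using e3' K by (simp add: mult_left_mono)
    have b: "e\<^sup>2 * (M * (2 * h + \<bar>s - s\<bar>)) \<le> e\<^sup>2 * (M * 2)"
    proof -
      have "M * (2 * h + \<bar>s - s\<bar>) \<le> M * 2" using h_le1 M by (simp add: mult_left_mono)
      thus ?thesis by (rule mult_left_mono) simp
    qed
    from add_mono[OF a b] have "2 * K * e ^ 3 + e\<^sup>2 * (M * (2 * h + \<bar>s - s\<bar>)) \<le> 2 * K * e\<^sup>2 + e\<^sup>2 * (M * 2)" .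
    thus ?thesis using hpos by (intro mult_left_mono) auto
  qed
  finally show ?thesis by (simp add: algebra_simps)
qed

lemma vtx_eq: assumes "1 \<le> i"
  shows "vtx dt h v u s i = (v (mid h i + h) s - v (mid h i - h) s) / (2 * h)
     + (u (mid h i + h) s + u (mid h i - h) s - 2 * u (mid h i) s) / (2 * dt)"
  using hpos dtpos unfolding vtx_def mid_Suc mid_pred[OF assms] by (simp add: field_simps)

lemma utx_eq: assumes "1 \<le> i"
  shows "utx dt h v u s i = (u (mid h i + h) s - u (mid h i - h) s) / (2 * h)
     + (v (mid h i + h) s + v (mid h i - h) s - 2 * v (mid h i) s) / (2 * dt)"
  using hpos dtpos unfolding utx_def mid_Suc mid_pred[OF assms] by (simp add: field_simps)

lemma hdt: "h / dt = 1 / CFL" using h_eq C dtpos by simp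

lemma sd_term: assumes "\<bar>Q\<bar> \<le> 2 * h * (e\<^sup>2 * (K + M))"
  shows "\<bar>Q / (2 * dt)\<bar> \<le> e\<^sup>2 * (K + M) / CFL"
proof -
  have "\<bar>Q / (2 * dt)\<bar> = \<bar>Q\<bar> / (2 * dt)" using dtpos by simp
  also have "\<dots> \<le> 2 * h * (e\<^sup>2 * (K + M)) / (2 * dt)" using divide_right_mono[OF assms, of "2 * dt"] dtpos by simp
  also have "\<dots> = (h / dt) * (e\<^sup>2 * (K + M))" by simp
  also have "\<dots> = e\<^sup>2 * (K + M) / CFL" by (simp add: hdt)
  finally show ?thesis .
qed

lemma VT_bd: assumes "1 \<le> i" "0 \<le> s"
  shows "\<bar>vtx dt h v u s i\<bar> \<le> e\<^sup>2 * (M + K) + e\<^sup>2 * (K + M) / CFL"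
proof -
  let ?m = "mid h i"
  have Dv: "\<bar>v (?m + h) s - v (?m - h) s\<bar> \<le> e\<^sup>2 * (M + K) * \<bar>(?m + h) - (?m - h)\<bar>"
    by (rule mvt_bound[of "\<lambda>y. v y s" "\<lambda>y. px v y s"]) (use sm_dx[OF sm(1)] vx_bd[OF assms(2)] in auto)
  have "\<bar>(v (?m + h) s - v (?m - h) s) / (2 * h)\<bar> \<le> e\<^sup>2 * (M + K)"
    using Dv hpos by (simp add: divide_le_eq)
  moreover have "\<bar>(u (?m + h) s + u (?m - h) s - 2 * u ?m s) / (2 * dt)\<bar> \<le> e\<^sup>2 * (K + M) / CFL"
    by (rule sd_term[OF sd_u[OF assms(2)]])
  ultimately show ?thesis unfolding vtx_eq[OF assms(1)] by (rule order.trans[OF abs_triangle_ineq add_mono])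
qed

end



context S begin

definition "c1 = M + K + (K + M) / CFL"
definition "c2 = 2 * K + 2 * M + (K + M) / CFL"
definition "c3 = (M + K) / CFL + c2 + 2 * K + M"
definition "c4 = c3 + (2 * K + M) / CFL"
definition "c5 = 2 * K + M / CFL + 2 * M + (M + K) + c1"
definition "c6 = c5 / (1 - e0)"
definition "c7 = (2 * K + 2 * M) / CFL"

lemma cs_nonneg: "0 \<le> c1" "0 \<le> c2" "0 \<le> c3" "0 \<le> c4" "0 \<le> c5" "0 \<le> c6" "0 \<le> c7"
  using K M C e unfolding c1_def c2_def c3_def c4_def c5_def c6_def c7_def by auto

lemma VT_bd': "1 \<le> i \<Longrightarrow> 0 \<le> s \<Longrightarrow> \<bar>vtx dt h v u s i\<bar> \<le> e\<^sup>2 * c1"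
  using VT_bd unfolding c1_def by (simp add: algebra_simps)

lemma eh: "e\<^sup>2 * h = e\<^sup>2 * dt / CFL" using h_eq by simp

lemma UT_err: assumes "1 \<le> i" "\<bar>x - mid h i\<bar> \<le> h"
  shows "\<bar>utx dt h v u t i - px u x t\<bar> \<le> e\<^sup>2 * c2"
proof -
  let ?m = "mid h i"
  obtain z where z: "min (?m - h) (?m + h) \<le> z" "z \<le> max (?m - h) (?m + h)"
      "u (?m + h) t - u (?m - h) t = ((?m + h) - (?m - h)) * px u z t"
    using mvt_ex[of "\<lambda>y. u y t" "\<lambda>y. px u y t"] sm_dx[OF sm(2)] by blast
  have q: "(u (?m + h) t - u (?m - h) t) / (2 * h) = px u z t" using z(3) hpos by simp
  have zx: "\<bar>z - x\<bar> \<le> 2 * h" using z(1,2) assms(2) hpos by (simp add: abs_le_iff)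
  have "\<bar>px u z t - px u x t\<bar> \<le> 2 * K * e ^ 3 + e\<^sup>2 * (M * (\<bar>z - x\<bar> + \<bar>t - t\<bar>))"
    by (rule ux_diff[OF t t])
  also have "\<dots> \<le> 2 * K * e\<^sup>2 + e\<^sup>2 * (M * 2)"
  proof -
    have a: "2 * K * e ^ 3 \<le> 2 * K * e\<^sup>2" using e3' K by (simp add: mult_left_mono)
    have b: "e\<^sup>2 * (M * (\<bar>z - x\<bar> + \<bar>t - t\<bar>)) \<le> e\<^sup>2 * (M * 2)"
    proof -
      have "M * (\<bar>z - x\<bar> + \<bar>t - t\<bar>) \<le> M * 2" using zx h_le1 M by (simp add: mult_left_mono)
      thus ?thesis by (rule mult_left_mono) simp
    qed
    from add_mono[OF a b] show ?thesis .
  qed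
  finally have 1: "\<bar>px u z t - px u x t\<bar> \<le> 2 * K * e\<^sup>2 + e\<^sup>2 * (M * 2)" .
  have 2: "\<bar>(v (?m + h) t + v (?m - h) t - 2 * v ?m t) / (2 * dt)\<bar> \<le> e\<^sup>2 * (K + M) / CFL"
    by (rule sd_term[OF sd_v[OF t]])
  have "utx dt h v u t i - px u x t = (px u z t - px u x t) + (v (?m + h) t + v (?m - h) t - 2 * v ?m t) / (2 * dt)"
    unfolding utx_eq[OF assms(1)] q by simp
  hence "\<bar>utx dt h v u t i - px u x t\<bar> \<le> (2 * K * e\<^sup>2 + e\<^sup>2 * (M * 2)) + e\<^sup>2 * (K + M) / CFL"
    using order.trans[OF abs_triangle_ineq add_mono[OF 1 2]] by simp
  thus ?thesis unfolding c2_def by (simp add: algebra_simps)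
qed

end



context S begin

lemma iota1_err: assumes i: "i \<in> {1..N}" and x: "x \<in> ocell N i"
  shows "\<bar>iota1 dt h v u t i - v x (t + dt)\<bar> \<le> e\<^sup>2 * dt * c3"
proof -
  note cx = cellx[OF i x]
  let ?m = "mid h i"
  obtain s where s: "t < s" "s < t + dt" "v x (t + dt) - v x t = (t + dt - t) * pt v x s"
    using MVT2[of t "t + dt" "\<lambda>s. v x s" "\<lambda>s. pt v x s"] dtpos sm_dt[OF sm(1)] by auto
  have ps: "pt v x s = px u x s" using pde[OF cx(1,2)] s(1) t by simp
  have eq: "iota1 dt h v u t i - v x (t + dt) = (v ?m t - v x t) + dt * (utx dt h v u t i - px u x t)
      + dt * (px u x t - px u x s)"
    unfolding iota1_def using s(3) ps by (simp add: algebra_simps)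
  have b1: "\<bar>v ?m t - v x t\<bar> \<le> e\<^sup>2 * dt * ((M + K) / CFL)"
  proof -
    have "\<bar>v ?m t - v x t\<bar> \<le> e\<^sup>2 * (M + K) * \<bar>?m - x\<bar>"
      by (rule mvt_bound[of "\<lambda>y. v y t" "\<lambda>y. px v y t"]) (use sm_dx[OF sm(1)] vx_bd[OF t] in auto)
    also have "\<dots> \<le> e\<^sup>2 * (M + K) * h"
      using cx(3) hpos K M by (intro mult_left_mono) (auto simp: abs_minus_commute)
    also have "\<dots> = e\<^sup>2 * dt * ((M + K) / CFL)" using h_eq by simp
    finally show ?thesis .
  qed
  have b2: "\<bar>dt * (utx dt h v u t i - px u x t)\<bar> \<le> e\<^sup>2 * dt * c2"
  proof -
    have "\<bar>utx dt h v u t i - px u x t\<bar> \<le> e\<^sup>2 * c2"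
      by (rule UT_err) (use i cx(3) hpos in auto)
    thus ?thesis using dtpos by (simp add: abs_mult mult_left_mono mult.commute mult.left_commute)
  qed
  have b3: "\<bar>dt * (px u x t - px u x s)\<bar> \<le> e\<^sup>2 * dt * (2 * K + M)"
  proof -
    have "\<bar>px u x t - px u x s\<bar> \<le> 2 * K * e ^ 3 + e\<^sup>2 * (M * (\<bar>x - x\<bar> + \<bar>t - s\<bar>))"
      by (rule ux_diff) (use t s in auto)
    also have "\<dots> \<le> 2 * K * e\<^sup>2 + e\<^sup>2 * M"
    proof -
      have a: "2 * K * e ^ 3 \<le> 2 * K * e\<^sup>2" using e3' K by (simp add: mult_left_mono)
      have "\<bar>t - s\<bar> \<le> 1" using s dt_le_h h_le1 by (simp add: abs_le_iff)
      hence "M * (\<bar>x - x\<bar> + \<bar>t - s\<bar>) \<le> M * 1" using M by (intro mult_left_mono) auto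
      hence b: "e\<^sup>2 * (M * (\<bar>x - x\<bar> + \<bar>t - s\<bar>)) \<le> e\<^sup>2 * M" by (simp add: mult_left_mono)
      from add_mono[OF a b] show ?thesis .
    qed
    finally have "\<bar>px u x t - px u x s\<bar> \<le> e\<^sup>2 * (2 * K + M)" by (simp add: algebra_simps)
    thus ?thesis using dtpos by (simp add: abs_mult mult_left_mono mult.commute mult.left_commute)
  qed
  have "\<bar>iota1 dt h v u t i - v x (t + dt)\<bar> \<le> e\<^sup>2 * dt * ((M + K) / CFL) + e\<^sup>2 * dt * c2 + e\<^sup>2 * dt * (2 * K + M)"
    unfolding eq by (rule order.trans[OF abs_triangle_ineq add_mono[OF order.trans[OF abs_triangle_ineq add_mono[OF b1 b2]] b3]])
  thus ?thesis unfolding c3_def by (simp add: algebra_simps)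
qed

definition "Vf = (\<lambda>y. v y (t + dt))"
definition "zf = interp N Vf"
definition "Tf = (\<lambda>x. e\<^sup>2 / (1 - e) * ((u x (t + dt) - u x t) / dt - vtx dt h v u t (cell h x) / e - g x t))"
definition "Gf = (\<lambda>x. gam e dt * Tf x + dt\<^sup>2 * (1 - e) * iota2 e dt h v u g t (cell h x))"
definition "C0 = dt\<^sup>2 * (1 - e) * ((u 0 (t + dt) - u 0 t) / dt)"

lemma Vf0: "Vf 0 = 0" "Vf 1 = 0" using bc[of "t + dt"] t dtpos unfolding Vf_def by auto

lemma zf_Vh: "zf \<in> Vh N" unfolding zf_def by (rule interp_Vh[OF N Vf0])

lemma nh: "node (1 / real N) = node h" using h by simp

lemma zf_props: assumes i: "i \<in> {1..N}" and x: "x \<in> ocell N i"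
  shows "\<bar>zf x - v x (t + dt)\<bar> \<le> e\<^sup>2 * dt * ((2 * K + M) / CFL)"
    "\<exists>\<xi>. \<bar>\<xi> - x\<bar> \<le> h \<and> deriv zf x = px v \<xi> (t + dt)"
proof -
  note cx = cellx[OF i x]
  let ?n = "node h i"
  have tt: "0 \<le> t + dt" using t dtpos by simp
  have zc: "zf x = Vf ?n + (x - ?n) * real N * (Vf (?n + h) - Vf ?n)"
    unfolding zf_def using interp_cell[OF N i, of x Vf] Vf0 cx(4,5) node_Suc by (simp add: nh)
  obtain \<xi> where \<xi>: "min ?n (?n + h) \<le> \<xi>" "\<xi> \<le> max ?n (?n + h)" "Vf (?n + h) - Vf ?n = (?n + h - ?n) * px v \<xi> (t + dt)"
    using mvt_ex[of Vf "\<lambda>y. px v y (t + dt)"] sm_dx[OF sm(1)] unfolding Vf_def by blast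
  obtain \<eta> where \<eta>: "min ?n x \<le> \<eta>" "\<eta> \<le> max ?n x" "Vf x - Vf ?n = (x - ?n) * px v \<eta> (t + dt)"
    using mvt_ex[of Vf "\<lambda>y. px v y (t + dt)"] sm_dx[OF sm(1)] unfolding Vf_def by blast
  have Nh: "real N * h = 1" using h N by simp
  have d1: "real N * (Vf (?n + h) - Vf ?n) = px v \<xi> (t + dt)" using \<xi>(3) Nh by (simp add: mult.assoc[symmetric])
  have zc': "zf x = Vf ?n + (x - ?n) * px v \<xi> (t + dt)" using zc d1 by (metis mult.assoc)
  have "zf x - v x (t + dt) = (Vf ?n + (x - ?n) * px v \<xi> (t + dt)) - (Vf ?n + (x - ?n) * px v \<eta> (t + dt))"
    using zc' \<eta>(3) unfolding Vf_def by linarith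
  also have "\<dots> = (x - ?n) * (px v \<xi> (t + dt) - px v \<eta> (t + dt))" by (simp add: algebra_simps)
  also have "\<bar>\<dots>\<bar> \<le> h * (e\<^sup>2 * (2 * K + M))"
  proof -
    have xn: "\<bar>x - ?n\<bar> \<le> h" using cx(4,5) by simp
    have "\<bar>px v \<xi> (t + dt) - px v \<eta> (t + dt)\<bar> \<le> 2 * K * e ^ 3 + e\<^sup>2 * (M * (\<bar>\<xi> - \<eta>\<bar> + \<bar>t + dt - (t + dt)\<bar>))"
      by (rule vx_diff[OF tt tt])
    also have "\<dots> \<le> 2 * K * e\<^sup>2 + e\<^sup>2 * M"
    proof -
      have a: "2 * K * e ^ 3 \<le> 2 * K * e\<^sup>2" using e3' K by (simp add: mult_left_mono)
      have "\<bar>\<xi> - \<eta>\<bar> \<le> 1" using \<xi>(1,2) \<eta>(1,2) cx(4,5) h_le1 by (simp add: abs_le_iff)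
      hence "M * (\<bar>\<xi> - \<eta>\<bar> + \<bar>t + dt - (t + dt)\<bar>) \<le> M * 1" using M by (intro mult_left_mono) auto
      hence b: "e\<^sup>2 * (M * (\<bar>\<xi> - \<eta>\<bar> + \<bar>t + dt - (t + dt)\<bar>)) \<le> e\<^sup>2 * M" by (simp add: mult_left_mono)
      from add_mono[OF a b] show ?thesis .
    qed
    finally have "\<bar>px v \<xi> (t + dt) - px v \<eta> (t + dt)\<bar> \<le> e\<^sup>2 * (2 * K + M)" by (simp add: algebra_simps)
    thus ?thesis unfolding abs_mult using xn by (intro mult_mono) auto
  qed
  also have "\<dots> = e\<^sup>2 * dt * ((2 * K + M) / CFL)" using h_eq by simp
  finally show "\<bar>zf x - v x (t + dt)\<bar> \<le> e\<^sup>2 * dt * ((2 * K + M) / CFL)" .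
  have "deriv zf x = real N * (Vf (?n + h) - Vf ?n)"
    unfolding zf_def using interp_deriv[OF N i x, of Vf] Vf0 node_Suc by (simp add: nh)
  hence "deriv zf x = px v \<xi> (t + dt)" using d1 by simp
  moreover have "\<bar>\<xi> - x\<bar> \<le> h" using \<xi>(1,2) cx(4,5) hpos by (simp add: abs_le_iff)
  ultimately show "\<exists>\<xi>. \<bar>\<xi> - x\<bar> \<le> h \<and> deriv zf x = px v \<xi> (t + dt)" by blast
qed

lemma e3X: "0 \<le> X \<Longrightarrow> e * (e\<^sup>2 * X) \<le> e\<^sup>2 * dt * X"
proof -
  assume X: "0 \<le> X"
  have "e * e\<^sup>2 = e ^ 3" by (simp add: power3_eq_cube power2_eq_square)
  hence "e * (e\<^sup>2 * X) = e ^ 3 * X" by (simp add: mult.assoc[symmetric])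
  also have "\<dots> \<le> e\<^sup>2 * dt * X" using e3 X by (rule mult_right_mono)
  finally show ?thesis .
qed

lemma one_m_e: "0 < 1 - e" "1 - e0 \<le> 1 - e" using e by auto

lemma Tz_bd: assumes i: "i \<in> {1..N}" and x: "x \<in> ocell N i"
  shows "\<bar>deriv zf x - Tf x\<bar> \<le> e\<^sup>2 * dt * c6"
proof -
  note cx = cellx[OF i x]
  obtain \<xi> where \<xi>: "\<bar>\<xi> - x\<bar> \<le> h" "deriv zf x = px v \<xi> (t + dt)" using zf_props(2)[OF i x] by blast
  obtain s where s: "t < s" "s < t + dt" "u x (t + dt) - u x t = (t + dt - t) * pt u x s"
    using MVT2[of t "t + dt" "\<lambda>s. u x s" "\<lambda>s. pt u x s"] dtpos sm_dt[OF sm(2)] by auto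
  have ps: "pt u x s = px v x s / e\<^sup>2 + g x s" using pde[OF cx(1,2)] s(1) t by simp
  let ?VT = "vtx dt h v u t i"
  have e0: "e \<noteq> 0" "1 - e \<noteq> 0" using e by auto
  have T1: "(1 - e) * Tf x = px v x s + e\<^sup>2 * (g x s - g x t) - e * ?VT"
    unfolding Tf_def cx(6) using s(3) ps dtpos e0 by (simp add: field_simps power2_eq_square)
  have eq: "(1 - e) * (deriv zf x - Tf x) = (px v \<xi> (t + dt) - px v x s) - e * px v \<xi> (t + dt)
       - e\<^sup>2 * (g x s - g x t) + e * ?VT"
    using T1 \<xi>(2) by (simp add: algebra_simps)
  have tt: "0 \<le> t + dt" "0 \<le> s" using t dtpos s by auto
  have a: "\<bar>px v \<xi> (t + dt) - px v x s\<bar> \<le> e\<^sup>2 * dt * (2 * K + M / CFL + M)"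
  proof -
    have "\<bar>px v \<xi> (t + dt) - px v x s\<bar> \<le> 2 * K * e ^ 3 + e\<^sup>2 * (M * (\<bar>\<xi> - x\<bar> + \<bar>t + dt - s\<bar>))"
      by (rule vx_diff[OF tt])
    also have "\<dots> \<le> 2 * K * (e\<^sup>2 * dt) + e\<^sup>2 * (M * (h + dt))"
    proof -
      have "\<bar>t + dt - s\<bar> \<le> dt" using s by simp
      hence "M * (\<bar>\<xi> - x\<bar> + \<bar>t + dt - s\<bar>) \<le> M * (h + dt)" using \<xi>(1) M by (intro mult_left_mono) auto
      hence b: "e\<^sup>2 * (M * (\<bar>\<xi> - x\<bar> + \<bar>t + dt - s\<bar>)) \<le> e\<^sup>2 * (M * (h + dt))" by (simp add: mult_left_mono)
      have a: "2 * K * e ^ 3 \<le> 2 * K * (e\<^sup>2 * dt)" using e3 K by (simp add: mult_left_mono)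
      from add_mono[OF a b] show ?thesis .
    qed
    also have "\<dots> = e\<^sup>2 * dt * (2 * K + M / CFL + M)" using h_eq C by (simp add: field_simps)
    finally show ?thesis .
  qed
  have b: "\<bar>e * px v \<xi> (t + dt)\<bar> \<le> e\<^sup>2 * dt * (M + K)"
  proof -
    have "\<bar>e * px v \<xi> (t + dt)\<bar> \<le> e * (e\<^sup>2 * (M + K))"
      using vx_bd[OF tt(1)] e by (simp add: abs_mult mult_left_mono)
    also have "\<dots> \<le> e\<^sup>2 * dt * (M + K)" using e3X K M by simp
    finally show ?thesis .
  qed
  have c: "\<bar>e\<^sup>2 * (g x s - g x t)\<bar> \<le> e\<^sup>2 * dt * M"
  proof -
    have "\<bar>g x s - g x t\<bar> \<le> M * \<bar>s - t\<bar>"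
      by (rule mvt_bound[of "\<lambda>s. g x s" "\<lambda>s. pt g x s"]) (use sm_dt[OF sm(3)] Bg t s in auto)
    also have "\<dots> \<le> M * dt" using s M by (intro mult_left_mono) auto
    finally have "\<bar>g x s - g x t\<bar> \<le> dt * M" by (simp add: mult.commute)
    hence "e\<^sup>2 * \<bar>g x s - g x t\<bar> \<le> e\<^sup>2 * (dt * M)" by (rule mult_left_mono) simp
    thus ?thesis by (simp add: abs_mult mult.assoc)
  qed
  have d: "\<bar>e * ?VT\<bar> \<le> e\<^sup>2 * dt * c1"
  proof -
    have "\<bar>e * ?VT\<bar> \<le> e * (e\<^sup>2 * c1)" using VT_bd'[of i t] i t e by (simp add: abs_mult mult_left_mono)
    also have "\<dots> \<le> e\<^sup>2 * dt * c1" using e3X cs_nonneg by simp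
    finally show ?thesis .
  qed
  have "\<bar>(1 - e) * (deriv zf x - Tf x)\<bar> \<le> e\<^sup>2 * dt * (2 * K + M / CFL + M) + e\<^sup>2 * dt * (M + K) + e\<^sup>2 * dt * M + e\<^sup>2 * dt * c1"
    unfolding eq using a b c d by (simp add: abs_le_iff)
  also have "\<dots> = e\<^sup>2 * dt * c5" unfolding c5_def by (simp add: algebra_simps)
  finally have 1: "(1 - e) * \<bar>deriv zf x - Tf x\<bar> \<le> e\<^sup>2 * dt * c5" using one_m_e by (simp add: abs_mult)
  have "(1 - e0) * \<bar>deriv zf x - Tf x\<bar> \<le> (1 - e) * \<bar>deriv zf x - Tf x\<bar>"
    using one_m_e by (intro mult_right_mono) auto
  hence "(1 - e0) * \<bar>deriv zf x - Tf x\<bar> \<le> e\<^sup>2 * dt * c5" using 1 by simp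
  thus ?thesis unfolding c6_def using e by (simp add: field_simps)
qed

lemma G_bd: assumes i: "i \<in> {1..N}" and x: "x \<in> ocell N i"
  shows "\<bar>Gf x - C0\<bar> \<le> dt ^ 3 * c7"
proof -
  note cx = cellx[OF i x]
  let ?VT = "vtx dt h v u t i"
  let ?D = "\<lambda>y. u y (t + dt) - u y t"
  have e0: "e \<noteq> 0" "1 - e \<noteq> 0" using e by auto
  have Geq: "Gf x = dt\<^sup>2 * (1 - e) * (?D x / dt + g (mid h i) t - g x t)"
    unfolding Gf_def Tf_def gam_def iota2_def cx(6) using e0 dtpos
    by (simp add: field_simps power2_eq_square)
  have GC: "Gf x - C0 = dt\<^sup>2 * (1 - e) * ((?D x - ?D 0) / dt + (g (mid h i) t - g x t))"
    unfolding Geq C0_def using dtpos by (simp add: field_simps)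
  obtain \<xi> where \<xi>: "min 0 x \<le> \<xi>" "\<xi> \<le> max 0 x" "?D x - ?D 0 = (x - 0) * (px u \<xi> (t + dt) - px u \<xi> t)"
  proof -
    have "\<And>y. (?D has_real_derivative px u y (t + dt) - px u y t) (at y)"
      using sm_dx[OF sm(2)] by (intro DERIV_diff) auto
    from mvt_ex[of ?D, OF this, of 0 x] show ?thesis using that by auto
  qed
  have tt: "0 \<le> t + dt" using t dtpos by simp
  have b1: "\<bar>(?D x - ?D 0) / dt\<bar> \<le> e\<^sup>2 * (2 * K + M)"
  proof -
    have "\<bar>px u \<xi> (t + dt) - px u \<xi> t\<bar> \<le> 2 * K * e ^ 3 + e\<^sup>2 * (M * (\<bar>\<xi> - \<xi>\<bar> + \<bar>t + dt - t\<bar>))"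
      by (rule ux_diff[OF tt t])
    also have "\<dots> \<le> 2 * K * (e\<^sup>2 * dt) + e\<^sup>2 * (M * dt)"
      using e3 K dtpos by (simp add: mult_left_mono)
    finally have p: "\<bar>px u \<xi> (t + dt) - px u \<xi> t\<bar> \<le> dt * (e\<^sup>2 * (2 * K + M))" by (simp add: algebra_simps)
    have "\<bar>?D x - ?D 0\<bar> \<le> 1 * (dt * (e\<^sup>2 * (2 * K + M)))"
      unfolding \<xi>(3) abs_mult using cx(1,2) p by (intro mult_mono) auto
    thus ?thesis using dtpos by (simp add: divide_le_eq mult.commute)
  qed
  have b2: "\<bar>g (mid h i) t - g x t\<bar> \<le> M * h"
  proof -
    have "\<bar>g (mid h i) t - g x t\<bar> \<le> M * \<bar>mid h i - x\<bar>"
      by (rule mvt_bound[of "\<lambda>y. g y t" "\<lambda>y. px g y t"]) (use sm_dx[OF sm(3)] Bg t in auto)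
    also have "\<dots> \<le> M * h" using cx(3) M hpos by (intro mult_left_mono) (auto simp: abs_minus_commute)
    finally show ?thesis .
  qed
  have b3: "e\<^sup>2 * (2 * K + M) + M * h \<le> h * (2 * K + 2 * M)"
  proof -
    have "e\<^sup>2 \<le> h" using e2_le_dt dt_le_h by simp
    hence "e\<^sup>2 * (2 * K + M) \<le> h * (2 * K + M)" using K M by (intro mult_right_mono) auto
    thus ?thesis by (simp add: algebra_simps)
  qed
  have "\<bar>Gf x - C0\<bar> = dt\<^sup>2 * (1 - e) * \<bar>(?D x - ?D 0) / dt + (g (mid h i) t - g x t)\<bar>"
    unfolding GC abs_mult using one_m_e by simp
  also have "\<dots> \<le> dt\<^sup>2 * 1 * (h * (2 * K + 2 * M))"
  proof (rule mult_mono)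
    show "dt\<^sup>2 * (1 - e) \<le> dt\<^sup>2 * 1" using e by (intro mult_left_mono) auto
    have "\<bar>(?D x - ?D 0) / dt + (g (mid h i) t - g x t)\<bar> \<le> e\<^sup>2 * (2 * K + M) + M * h"
      using b1 b2 by (rule order.trans[OF abs_triangle_ineq add_mono])
    thus "\<bar>(?D x - ?D 0) / dt + (g (mid h i) t - g x t)\<bar> \<le> h * (2 * K + 2 * M)" using b3 by simp
  qed auto
  also have "\<dots> = dt ^ 3 * c7" unfolding c7_def h_eq using C by (simp add: field_simps power3_eq_cube power2_eq_square)
  finally show ?thesis .
qed

end



lemma int_cmul: "integral A (\<lambda>x. (c::real) * f x) = c * integral A f"
  using integral_cmul[of A c f] by simp

lemma int_le_ae:
  assumes N: "1 \<le> N" and fi: "f integrable_on {0..1}" and gi: "g integrable_on {0..1}"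
    and le: "\<And>i x. i \<in> {1..N} \<Longrightarrow> x \<in> ocell N i \<Longrightarrow> f x \<le> (g x :: real)"
  shows "integral {0..1} f \<le> integral {0..1} g"
proof -
  define f' where "f' = (\<lambda>x. if x \<in> SN N then g x else f x)"
  have "integral {0..1} f = integral {0..1} f'"
    by (rule integral_spike[OF negligible_finite[OF finite_SN[of N]]]) (simp add: f'_def)
  moreover have "f' integrable_on {0..1}"
    by (rule integrable_spike_finite[OF finite_SN[of N] _ fi]) (simp add: f'_def)
  moreover have "\<And>x. x \<in> {0..1} \<Longrightarrow> f' x \<le> g x"
  proof -
    fix x :: real assume x: "x \<in> {0..1}"
    show "f' x \<le> g x"
    proof (cases "x \<in> SN N")
      case False
      then obtain i where "i \<in> {1..N}" "x \<in> ocell N i" using ae_cell[OF N] x by blast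
      thus ?thesis using le False by (simp add: f'_def)
    qed (simp add: f'_def)
  qed
  ultimately show ?thesis using integral_le[of f' "{0..1}" g] gi by simp
qed

lemma int_eq_ae:
  assumes N: "1 \<le> N" and eq: "\<And>i x. i \<in> {1..N} \<Longrightarrow> x \<in> ocell N i \<Longrightarrow> f x = (g x :: real)"
  shows "integral {0..1} f = integral {0..1} g"
proof (rule integral_spike[OF negligible_finite[OF finite_SN[of N]]])
  fix x assume x: "x \<in> {0..1} - SN N"
  then obtain i where "i \<in> {1..N}" "x \<in> ocell N i" using ae_cell[OF N] by blast
  thus "g x = f x" using eq by simp
qed

lemma pw_cdiv: "pw N f \<Longrightarrow> pw N (\<lambda>x. f x / c)"
proof -
  assume "pw N f"
  hence "pw N (\<lambda>x. f x * (1 / c))" by (intro pw_mult pw_const)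
  thus ?thesis by simp
qed

lemma pw_sq: "pw N f \<Longrightarrow> pw N (\<lambda>x. (f x)\<^sup>2)"
  unfolding power2_eq_square by (rule pw_mult)

context S begin

lemma pw_ux: "pw N (\<lambda>x. u x s)" by (rule pw_cont[OF sm_cont_x[OF sm(2)]])
lemma pw_gx: "pw N (\<lambda>x. g x s)" by (rule pw_cont[OF sm_cont_x[OF sm(3)]])
lemma pw_cellh: "pw N (\<lambda>x. c (cell h x))" using pw_cell[of N c] h by simp

lemmas pw_rules = pw_add pw_diff pw_mult pw_cdiv pw_sq pw_const pw_ux pw_gx pw_cellh

lemma pw_Tf: "pw N Tf" unfolding Tf_def by (intro pw_rules)
lemma pw_Gf: "pw N Gf" unfolding Gf_def by (intro pw_rules pw_Tf)

lemma gam_pos: "0 < gam e dt" unfolding gam_def using e dtpos by simp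

lemma sq_le: "\<bar>a\<bar> \<le> (A::real) \<Longrightarrow> a\<^sup>2 \<le> A\<^sup>2"
  by (metis abs_ge_zero power2_abs power_mono)

lemma alpha_bd: assumes i: "i \<in> {1..N}" and x: "x \<in> ocell N i"
  shows "\<bar>iota1 dt h v u t (cell h x) - zf x\<bar> \<le> e\<^sup>2 * dt * c4"
proof -
  have "iota1 dt h v u t (cell h x) - zf x = (iota1 dt h v u t i - v x (t + dt)) - (zf x - v x (t + dt))"
    using cellx(6)[OF i x] by simp
  hence "\<bar>iota1 dt h v u t (cell h x) - zf x\<bar> \<le> e\<^sup>2 * dt * c3 + e\<^sup>2 * dt * ((2 * K + M) / CFL)"
    using iota1_err[OF i x] zf_props(1)[OF i x] by (simp add: abs_le_iff)
  thus ?thesis unfolding c4_def by (simp add: algebra_simps)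
qed

lemma beta_bd: assumes i: "i \<in> {1..N}" and x: "x \<in> ocell N i"
  shows "\<bar>Gf x - C0 - gam e dt * (Tf x - deriv zf x)\<bar> \<le> dt ^ 3 * (c7 + c6)"
proof -
  have g1: "\<bar>gam e dt * (Tf x - deriv zf x)\<bar> \<le> gam e dt * (e\<^sup>2 * dt * c6)"
    using Tz_bd[OF i x] gam_pos by (simp add: abs_mult abs_minus_commute mult_left_mono)
  have g2: "gam e dt * (e\<^sup>2 * dt * c6) = dt ^ 3 * ((1 - e)\<^sup>2 * c6)"
    unfolding gam_def using e by (simp add: field_simps power2_eq_square power3_eq_cube)
  have g3: "dt ^ 3 * ((1 - e)\<^sup>2 * c6) \<le> dt ^ 3 * c6"
  proof -
    have "(1 - e)\<^sup>2 \<le> 1" using e by (simp add: power_le_one)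
    hence "(1 - e)\<^sup>2 * c6 \<le> 1 * c6" using cs_nonneg by (intro mult_right_mono) auto
    thus ?thesis using dtpos by (simp add: mult_left_mono)
  qed
  have "\<bar>Gf x - C0 - gam e dt * (Tf x - deriv zf x)\<bar> \<le> dt ^ 3 * c7 + dt ^ 3 * c6"
    using G_bd[OF i x] g1 g2 g3 by (simp add: abs_le_iff)
  thus ?thesis by (simp add: algebra_simps)
qed

lemma energy:
  assumes vh: "vh \<in> Vh N" and gal: "\<forall>\<phi>\<in>Vh N. aform e dt vh \<phi> = iota_h e dt h v u g t \<phi>"
  shows "integral {0..1} (\<lambda>x. (deriv (\<lambda>y. vh y - zf y) x)\<^sup>2)
      \<le> (2 / gam e dt) * ((e\<^sup>2 * dt * c4)\<^sup>2 / 4 + (dt ^ 3 * (c7 + c6))\<^sup>2 / (2 * gam e dt))"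
proof -
  define E where "E = (\<lambda>y. vh y - zf y)"
  define \<gamma> where "\<gamma> = gam e dt"
  define A where "A = e\<^sup>2 * dt * c4"
  define B where "B = dt ^ 3 * (c7 + c6)"
  have gp: "0 < \<gamma>" unfolding \<gamma>_def by (rule gam_pos)
  have EV: "E \<in> Vh N" unfolding E_def by (rule Vh_diff[OF vh zf_Vh])
  have dE: "deriv E x = deriv vh x - deriv zf x" if "i \<in> {1..N}" "x \<in> ocell N i" for i x
  proof -
    have "(E has_real_derivative deriv vh x - deriv zf x) (at x)"
      unfolding E_def by (intro DERIV_diff Vh_deriv[OF vh that] Vh_deriv[OF zf_Vh that])
    thus ?thesis by (rule DERIV_imp_deriv)
  qed
  define \<alpha> where "\<alpha> = (\<lambda>x. iota1 dt h v u t (cell h x) - zf x)"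
  define \<beta> where "\<beta> = (\<lambda>x. Gf x - C0 - \<gamma> * (Tf x - deriv zf x))"
  define W where "W = (\<lambda>x. \<alpha> x * E x - \<beta> x * deriv E x - (E x)\<^sup>2 - \<gamma> / 2 * (deriv E x)\<^sup>2)"
  define P1 where "P1 = (\<lambda>x. gam e dt * deriv vh x * deriv E x + vh x * E x)"
  define P2 where "P2 = (\<lambda>x. iota1 dt h v u t (cell h x) * E x - dt\<^sup>2 * (1 - e) * iota2 e dt h v u g t (cell h x) * deriv E x)"
  have pE: "pw N E" "pw N (deriv E)" using pw_Vh[OF EV] pw_deriv_Vh[OF EV] .
  have pv: "pw N vh" "pw N (deriv vh)" using pw_Vh[OF vh] pw_deriv_Vh[OF vh] .
  have pz: "pw N zf" "pw N (deriv zf)" using pw_Vh[OF zf_Vh] pw_deriv_Vh[OF zf_Vh] .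
  have pi1: "pw N (\<lambda>x. iota1 dt h v u t (cell h x))" by (rule pw_cellh)
  have pi2: "pw N (\<lambda>x. iota2 e dt h v u g t (cell h x))" by (rule pw_cellh)
  note pws = pE pv pz pi1 pi2 pw_Tf pw_Gf
  have iP1: "P1 integrable_on {0..1}" unfolding P1_def by (intro pw_integrable[OF N] pw_rules pws)
  have iP2: "P2 integrable_on {0..1}" unfolding P2_def by (intro pw_integrable[OF N] pw_rules pws)
  have iE': "(\<lambda>x. C0 * deriv E x) integrable_on {0..1}" by (intro pw_integrable[OF N] pw_rules pws)
  have iW: "W integrable_on {0..1}" unfolding W_def \<alpha>_def \<beta>_def by (intro pw_integrable[OF N] pw_rules pws)
  have iE2: "(\<lambda>x. (deriv E x)\<^sup>2) integrable_on {0..1}" by (intro pw_integrable[OF N] pw_rules pws)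
  have ident: "\<gamma> / 2 * (deriv E x)\<^sup>2 = P1 x - P2 x - C0 * deriv E x + W x"
    if "i \<in> {1..N}" "x \<in> ocell N i" for i x
    unfolding P1_def P2_def W_def \<alpha>_def \<beta>_def Gf_def \<gamma>_def dE[OF that]
    by (simp add: E_def algebra_simps power2_eq_square)
  have "integral {0..1} (\<lambda>x. \<gamma> / 2 * (deriv E x)\<^sup>2) = integral {0..1} (\<lambda>x. P1 x - P2 x - C0 * deriv E x + W x)"
    by (rule int_eq_ae[OF N ident])
  also have "\<dots> = integral {0..1} P1 - integral {0..1} P2 - integral {0..1} (\<lambda>x. C0 * deriv E x) + integral {0..1} W"
    using iP1 iP2 iE' iW by (simp add: integral_add integral_diff integrable_diff integrable_add)
  also have "integral {0..1} P1 = integral {0..1} P2"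
    using gal EV unfolding P1_def P2_def aform_def iota_h_def by simp
  also have "integral {0..1} (\<lambda>x. C0 * deriv E x) = 0"
    using Vh_int_deriv[OF N EV] int_cmul[of "{0..1}" C0 "deriv E"] by (simp add: integral_unique)
  finally have eqW: "integral {0..1} (\<lambda>x. \<gamma> / 2 * (deriv E x)\<^sup>2) = integral {0..1} W" by simp
  have ic: "(\<lambda>x::real. A\<^sup>2 / 4 + B\<^sup>2 / (2 * \<gamma>)) integrable_on {0..1}" by (intro pw_integrable[OF N] pw_rules)
  have le: "W x \<le> A\<^sup>2 / 4 + B\<^sup>2 / (2 * \<gamma>)" if ix: "i \<in> {1..N}" "x \<in> ocell N i" for i x
  proof -
    have a: "(\<alpha> x)\<^sup>2 \<le> A\<^sup>2" unfolding \<alpha>_def A_def by (rule sq_le[OF alpha_bd[OF ix]])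
    have b: "(\<beta> x)\<^sup>2 \<le> B\<^sup>2" unfolding \<beta>_def B_def \<gamma>_def by (rule sq_le[OF beta_bd[OF ix]])
    have 1: "\<alpha> x * E x - (E x)\<^sup>2 \<le> A\<^sup>2 / 4" using young1[of "\<alpha> x" "E x"] a by simp
    have 2: "- \<beta> x * deriv E x - \<gamma> / 2 * (deriv E x)\<^sup>2 \<le> B\<^sup>2 / (2 * \<gamma>)"
      using young2[OF gp, of "\<beta> x" "deriv E x"] divide_right_mono[OF b, of "2 * \<gamma>"] gp by simp
    show "W x \<le> A\<^sup>2 / 4 + B\<^sup>2 / (2 * \<gamma>)" unfolding W_def using 1 2 by simp
  qed
  have "integral {0..1} W \<le> integral {0..1} (\<lambda>x::real. A\<^sup>2 / 4 + B\<^sup>2 / (2 * \<gamma>))"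
    using int_le_ae[OF N iW ic] le by blast
  also have "\<dots> = A\<^sup>2 / 4 + B\<^sup>2 / (2 * \<gamma>)" by simp
  finally have "\<gamma> / 2 * integral {0..1} (\<lambda>x. (deriv E x)\<^sup>2) \<le> A\<^sup>2 / 4 + B\<^sup>2 / (2 * \<gamma>)"
    using eqW int_cmul[of "{0..1}" "\<gamma> / 2" "\<lambda>x. (deriv E x)\<^sup>2"] by simp
  hence "integral {0..1} (\<lambda>x. (deriv E x)\<^sup>2) \<le> (2 / \<gamma>) * (A\<^sup>2 / 4 + B\<^sup>2 / (2 * \<gamma>))"
    using gp by (simp add: field_simps)
  thus ?thesis unfolding E_def A_def B_def \<gamma>_def .
qed

definition "Cf = c4\<^sup>2 + 2 * (c7 + c6)\<^sup>2 / (1 - e0)\<^sup>2 + 2 * c6\<^sup>2"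

lemma final:
  assumes vh: "vh \<in> Vh N" and gal: "\<forall>\<phi>\<in>Vh N. aform e dt vh \<phi> = iota_h e dt h v u g t \<phi>"
  shows "L2norm01 (\<lambda>x. uh e dt h v u g t vh x - u x (t + dt)) \<le> sqrt Cf * dt\<^sup>2"
proof -
  define E where "E = (\<lambda>y. vh y - zf y)"
  define c where "c = dt * (1 - e) / e\<^sup>2"
  define Z where "Z = e\<^sup>2 * dt * c6"
  define EB where "EB = (2 / gam e dt) * ((e\<^sup>2 * dt * c4)\<^sup>2 / 4 + (dt ^ 3 * (c7 + c6))\<^sup>2 / (2 * gam e dt))"
  have e0: "e \<noteq> 0" "1 - e \<noteq> 0" "dt \<noteq> 0" using e dtpos by auto
  have EV: "E \<in> Vh N" unfolding E_def by (rule Vh_diff[OF vh zf_Vh])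
  have dE: "deriv E x = deriv vh x - deriv zf x" if "i \<in> {1..N}" "x \<in> ocell N i" for i x
  proof -
    have "(E has_real_derivative deriv vh x - deriv zf x) (at x)"
      unfolding E_def by (intro DERIV_diff Vh_deriv[OF vh that] Vh_deriv[OF zf_Vh that])
    thus ?thesis by (rule DERIV_imp_deriv)
  qed
  have en: "integral {0..1} (\<lambda>x. (deriv E x)\<^sup>2) \<le> EB" unfolding E_def EB_def by (rule energy[OF vh gal])
  have pts: "uh e dt h v u g t vh x - u x (t + dt) = c * (deriv vh x - Tf x)" for x
    unfolding uh_def Tf_def c_def using e0 by (simp add: field_simps power2_eq_square)
  have pE: "pw N (deriv E)" using pw_deriv_Vh[OF EV] .
  have pv: "pw N (deriv vh)" using pw_deriv_Vh[OF vh] .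
  have "integral {0..1} (\<lambda>x. (uh e dt h v u g t vh x - u x (t + dt))\<^sup>2) = integral {0..1} (\<lambda>x. c\<^sup>2 * (deriv vh x - Tf x)\<^sup>2)"
    unfolding pts by (simp add: power_mult_distrib)
  also have "\<dots> \<le> integral {0..1} (\<lambda>x. 2 * c\<^sup>2 * (deriv E x)\<^sup>2 + 2 * c\<^sup>2 * Z\<^sup>2)"
  proof (rule int_le_ae[OF N])
    show "(\<lambda>x. c\<^sup>2 * (deriv vh x - Tf x)\<^sup>2) integrable_on {0..1}" by (intro pw_integrable[OF N] pw_rules pv pw_Tf)
    show "(\<lambda>x. 2 * c\<^sup>2 * (deriv E x)\<^sup>2 + 2 * c\<^sup>2 * Z\<^sup>2) integrable_on {0..1}" by (intro pw_integrable[OF N] pw_rules pE)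
    fix i x assume ix: "i \<in> {1..N}" "x \<in> ocell N i"
    have s: "deriv vh x - Tf x = deriv E x + (deriv zf x - Tf x)" using dE[OF ix] by simp
    have z: "(deriv zf x - Tf x)\<^sup>2 \<le> Z\<^sup>2" unfolding Z_def by (rule sq_le[OF Tz_bd[OF ix]])
    have "(deriv vh x - Tf x)\<^sup>2 \<le> 2 * (deriv E x)\<^sup>2 + 2 * (deriv zf x - Tf x)\<^sup>2"
    proof -
      have "0 \<le> (deriv E x - (deriv zf x - Tf x))\<^sup>2" by simp
      thus ?thesis unfolding s by (simp add: power2_eq_square algebra_simps)
    qed
    also have "\<dots> \<le> 2 * (deriv E x)\<^sup>2 + 2 * Z\<^sup>2" using z by simp
    finally have "c\<^sup>2 * (deriv vh x - Tf x)\<^sup>2 \<le> c\<^sup>2 * (2 * (deriv E x)\<^sup>2 + 2 * Z\<^sup>2)" by (simp add: mult_left_mono)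
    thus "c\<^sup>2 * (deriv vh x - Tf x)\<^sup>2 \<le> 2 * c\<^sup>2 * (deriv E x)\<^sup>2 + 2 * c\<^sup>2 * Z\<^sup>2" by (simp add: algebra_simps)
  qed
  also have "\<dots> = 2 * c\<^sup>2 * integral {0..1} (\<lambda>x. (deriv E x)\<^sup>2) + 2 * c\<^sup>2 * Z\<^sup>2"
  proof -
    have i1: "(\<lambda>x. 2 * c\<^sup>2 * (deriv E x)\<^sup>2) integrable_on {0..1}" by (intro pw_integrable[OF N] pw_rules pE)
    have i2: "(\<lambda>x::real. 2 * c\<^sup>2 * Z\<^sup>2) integrable_on {0..1}" by (intro pw_integrable[OF N] pw_rules)
    show ?thesis using integral_add[OF i1 i2] int_cmul[of "{0..1}" "2 * c\<^sup>2" "\<lambda>x. (deriv E x)\<^sup>2"] by simp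
  qed
  also have "\<dots> \<le> 2 * c\<^sup>2 * EB + 2 * c\<^sup>2 * Z\<^sup>2" using en by (simp add: mult_left_mono)
  also have "\<dots> = e\<^sup>2 * dt\<^sup>2 * c4\<^sup>2 + 2 * dt ^ 4 * (c7 + c6)\<^sup>2 / (1 - e)\<^sup>2 + 2 * dt ^ 4 * (1 - e)\<^sup>2 * c6\<^sup>2"
  proof -
    define \<gamma> where "\<gamma> = gam e dt"
    define A where "A = e\<^sup>2 * dt * c4"
    define B where "B = dt ^ 3 * (c7 + c6)"
    have gp: "0 < \<gamma>" unfolding \<gamma>_def by (rule gam_pos)
    have cg: "c\<^sup>2 = \<gamma> / e\<^sup>2" unfolding c_def \<gamma>_def gam_def using e0 by (simp add: field_simps power2_eq_square)
    have eg: "e\<^sup>2 * \<gamma> = dt\<^sup>2 * (1 - e)\<^sup>2" unfolding \<gamma>_def gam_def using e0 by (simp add: field_simps)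
    have 1: "2 * c\<^sup>2 * EB = A\<^sup>2 / e\<^sup>2 + 2 * B\<^sup>2 / (e\<^sup>2 * \<gamma>)"
      unfolding EB_def cg \<gamma>_def[symmetric] A_def[symmetric] B_def[symmetric] using gp e0 by (simp add: field_simps)
    have 2: "A\<^sup>2 / e\<^sup>2 = e\<^sup>2 * dt\<^sup>2 * c4\<^sup>2" unfolding A_def using e0 by (simp add: field_simps power2_eq_square)
    have 3: "2 * B\<^sup>2 / (e\<^sup>2 * \<gamma>) = 2 * dt ^ 4 * (c7 + c6)\<^sup>2 / (1 - e)\<^sup>2"
    proof -
      have q: "(dt ^ 3 * (c7 + c6))\<^sup>2 = dt\<^sup>2 * (dt ^ 4 * (c7 + c6)\<^sup>2)"
        by (simp add: power2_eq_square power3_eq_cube power4_eq_xxxx algebra_simps)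
      have "2 * B\<^sup>2 / (e\<^sup>2 * \<gamma>) = dt\<^sup>2 * (2 * dt ^ 4 * (c7 + c6)\<^sup>2) / (dt\<^sup>2 * (1 - e)\<^sup>2)"
        unfolding eg B_def q by (simp add: algebra_simps)
      also have "\<dots> = 2 * dt ^ 4 * (c7 + c6)\<^sup>2 / (1 - e)\<^sup>2"
        using e0 by (subst mult_divide_mult_cancel_left) auto
      finally show ?thesis .
    qed
    have 4: "2 * c\<^sup>2 * Z\<^sup>2 = 2 * dt ^ 4 * (1 - e)\<^sup>2 * c6\<^sup>2"
      unfolding cg Z_def \<gamma>_def gam_def using e0 by (simp add: field_simps power2_eq_square power4_eq_xxxx)
    show ?thesis using 1 2 3 4 by simp
  qed
  also have "\<dots> \<le> dt ^ 4 * Cf"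
  proof -
    have a: "e\<^sup>2 * dt\<^sup>2 * c4\<^sup>2 \<le> dt ^ 4 * c4\<^sup>2"
    proof -
      have "e\<^sup>2 \<le> dt\<^sup>2" using edt e by (simp add: power_mono)
      hence "e\<^sup>2 * dt\<^sup>2 \<le> dt\<^sup>2 * dt\<^sup>2" by (rule mult_right_mono) simp
      hence "e\<^sup>2 * dt\<^sup>2 \<le> dt ^ 4" by (simp add: power2_eq_square power4_eq_xxxx mult.assoc)
      thus ?thesis by (simp add: mult_right_mono)
    qed
    have b: "2 * dt ^ 4 * (c7 + c6)\<^sup>2 / (1 - e)\<^sup>2 \<le> dt ^ 4 * (2 * (c7 + c6)\<^sup>2 / (1 - e0)\<^sup>2)"
    proof -
      have "(1 - e0)\<^sup>2 \<le> (1 - e)\<^sup>2" using e by (intro power_mono) auto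
      moreover have "0 < (1 - e0)\<^sup>2" using e by simp
      moreover have "0 < (1 - e)\<^sup>2" using e by simp
      ultimately have "2 * dt ^ 4 * (c7 + c6)\<^sup>2 / (1 - e)\<^sup>2 \<le> 2 * dt ^ 4 * (c7 + c6)\<^sup>2 / (1 - e0)\<^sup>2"
        by (intro divide_left_mono) auto
      thus ?thesis by (simp add: algebra_simps)
    qed
    have c: "2 * dt ^ 4 * (1 - e)\<^sup>2 * c6\<^sup>2 \<le> dt ^ 4 * (2 * c6\<^sup>2)"
    proof -
      have "(1 - e)\<^sup>2 \<le> 1" using e by (simp add: power_le_one)
      hence "(2 * dt ^ 4 * c6\<^sup>2) * (1 - e)\<^sup>2 \<le> (2 * dt ^ 4 * c6\<^sup>2) * 1" by (intro mult_left_mono) auto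
      thus ?thesis by (simp add: algebra_simps)
    qed
    show ?thesis using a b c unfolding Cf_def by (simp add: algebra_simps)
  qed
  finally have I: "integral {0..1} (\<lambda>x. (uh e dt h v u g t vh x - u x (t + dt))\<^sup>2) \<le> dt ^ 4 * Cf" .
  have "L2norm01 (\<lambda>x. uh e dt h v u g t vh x - u x (t + dt)) \<le> sqrt (dt ^ 4 * Cf)"
    unfolding L2norm01_def using I by (rule real_sqrt_le_mono)
  also have "sqrt (dt ^ 4 * Cf) = dt\<^sup>2 * sqrt Cf"
  proof -
    have "dt ^ 4 = (dt\<^sup>2)\<^sup>2" by simp
    hence "sqrt (dt ^ 4 * Cf) = sqrt ((dt\<^sup>2)\<^sup>2) * sqrt Cf" by (simp add: real_sqrt_mult)
    also have "sqrt ((dt\<^sup>2)\<^sup>2) = dt\<^sup>2" by (simp only: real_sqrt_abs) simp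
    finally show ?thesis .
  qed
  finally show ?thesis by (simp add: mult.commute)
qed

end


theorem theorem4:
  fixes eps0 CFL K :: real
    and v u :: "real \<Rightarrow> real \<Rightarrow> real \<Rightarrow> real"
    and v2 u2 g :: "real \<Rightarrow> real \<Rightarrow> real"
  assumes eps0: "0 < eps0" "eps0 < 1"
    and CFL: "0 < CFL" "CFL < 1"
    and smooth: "\<forall>\<epsilon>. 0 < \<epsilon> \<and> \<epsilon> \<le> eps0 \<longrightarrow> smooth2 (v \<epsilon>) \<and> smooth2 (u \<epsilon>)"
    and pde: "\<forall>\<epsilon> x t. 0 < \<epsilon> \<and> \<epsilon> \<le> eps0 \<and> 0 < x \<and> x < 1 \<and> 0 < t \<longrightarrow>
                 pt (v \<epsilon>) x t - px (u \<epsilon>) x t = 0 \<and>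
                 pt (u \<epsilon>) x t - px (v \<epsilon>) x t / \<epsilon>\<^sup>2 = g x t"
    and bc: "\<forall>\<epsilon> t. 0 < \<epsilon> \<and> \<epsilon> \<le> eps0 \<and> 0 \<le> t \<longrightarrow> v \<epsilon> 0 t = 0 \<and> v \<epsilon> 1 t = 0"
    and limits_smooth: "smooth2 v2" "smooth2 u2" "smooth2 g"
    and limits_bounded: "bounded_derivs v2" "bounded_derivs u2" "bounded_derivs g"
    and A1_v: "\<forall>\<epsilon> x t. 0 < \<epsilon> \<and> \<epsilon> \<le> eps0 \<and> 0 \<le> t \<longrightarrow>
                 \<bar>v \<epsilon> x t - \<epsilon>\<^sup>2 * v2 x t\<bar> \<le> K * \<epsilon> ^ 3 \<and>
                 \<bar>px (v \<epsilon>) x t - \<epsilon>\<^sup>2 * px v2 x t\<bar> \<le> K * \<epsilon> ^ 3 \<and>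
                 \<bar>pt (v \<epsilon>) x t - \<epsilon>\<^sup>2 * pt v2 x t\<bar> \<le> K * \<epsilon> ^ 3"
    and A1_u: "\<forall>\<epsilon> x t. 0 < \<epsilon> \<and> \<epsilon> \<le> eps0 \<and> 0 \<le> t \<longrightarrow>
                 \<bar>px (u \<epsilon>) x t - \<epsilon>\<^sup>2 * px u2 x t\<bar> \<le> K * \<epsilon> ^ 3 \<and>
                 \<bar>px (px (u \<epsilon>)) x t - \<epsilon>\<^sup>2 * px (px u2) x t\<bar> \<le> K * \<epsilon> ^ 3 \<and>
                 \<bar>pt (px (u \<epsilon>)) x t - \<epsilon>\<^sup>2 * pt (px u2) x t\<bar> \<le> K * \<epsilon> ^ 3"
  shows "\<exists>C. \<forall>\<epsilon> dx dt (N::nat) (n::nat) vh.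
           0 < \<epsilon> \<and> \<epsilon> \<le> eps0 \<and> 1 \<le> N \<and> dx = 1 / real N \<and> dt = CFL * dx \<and> \<epsilon> \<le> dt \<and>
           vh \<in> Vh N \<and>
           (\<forall>\<phi>\<in>Vh N. aform \<epsilon> dt vh \<phi> = iota_h \<epsilon> dt dx (v \<epsilon>) (u \<epsilon>) g (real n * dt) \<phi>)
           \<longrightarrow> L2norm01 (\<lambda>x. uh \<epsilon> dt dx (v \<epsilon>) (u \<epsilon>) g (real n * dt) vh x
                               - u \<epsilon> x (real (Suc n) * dt))
               \<le> C * (dt\<^sup>2 + \<epsilon> ^ 4 / dx\<^sup>2 + \<epsilon>\<^sup>2)"
  proof -
  obtain B1 where B1: "\<forall>x t. 0 \<le> t \<longrightarrow> \<bar>pd [True, True] v2 x t\<bar> \<le> B1" using limits_bounded(1) unfolding bounded_derivs_def by blast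
  obtain B2 where B2: "\<forall>x t. 0 \<le> t \<longrightarrow> \<bar>pd [False, True] v2 x t\<bar> \<le> B2" using limits_bounded(1) unfolding bounded_derivs_def by blast
  obtain B3 where B3: "\<forall>x t. 0 \<le> t \<longrightarrow> \<bar>pd [True] v2 x t\<bar> \<le> B3" using limits_bounded(1) unfolding bounded_derivs_def by blast
  obtain B4 where B4: "\<forall>x t. 0 \<le> t \<longrightarrow> \<bar>pd [True, True] u2 x t\<bar> \<le> B4" using limits_bounded(2) unfolding bounded_derivs_def by blast
  obtain B5 where B5: "\<forall>x t. 0 \<le> t \<longrightarrow> \<bar>pd [False, True] u2 x t\<bar> \<le> B5" using limits_bounded(2) unfolding bounded_derivs_def by blast
  obtain B6 where B6: "\<forall>x t. 0 \<le> t \<longrightarrow> \<bar>pd [True] u2 x t\<bar> \<le> B6" using limits_bounded(2) unfolding bounded_derivs_def by blast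
  obtain B7 where B7: "\<forall>x t. 0 \<le> t \<longrightarrow> \<bar>pd [True] g x t\<bar> \<le> B7" using limits_bounded(3) unfolding bounded_derivs_def by blast
  obtain B8 where B8: "\<forall>x t. 0 \<le> t \<longrightarrow> \<bar>pd [False] g x t\<bar> \<le> B8" using limits_bounded(3) unfolding bounded_derivs_def by blast
  define M where "M = \<bar>B1\<bar> + \<bar>B2\<bar> + \<bar>B3\<bar> + \<bar>B4\<bar> + \<bar>B5\<bar> + \<bar>B6\<bar> + \<bar>B7\<bar> + \<bar>B8\<bar>"
  have a: "0 \<le> \<bar>B1\<bar>" "0 \<le> \<bar>B2\<bar>" "0 \<le> \<bar>B3\<bar>" "0 \<le> \<bar>B4\<bar>" "0 \<le> \<bar>B5\<bar>" "0 \<le> \<bar>B6\<bar>" "0 \<le> \<bar>B7\<bar>" "0 \<le> \<bar>B8\<bar>"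
    "B1 \<le> \<bar>B1\<bar>" "B2 \<le> \<bar>B2\<bar>" "B3 \<le> \<bar>B3\<bar>" "B4 \<le> \<bar>B4\<bar>" "B5 \<le> \<bar>B5\<bar>" "B6 \<le> \<bar>B6\<bar>" "B7 \<le> \<bar>B7\<bar>" "B8 \<le> \<bar>B8\<bar>"
    by simp_all
  have M0: "0 \<le> M" unfolding M_def using a by linarith
  have MB: "B1 \<le> M" "B2 \<le> M" "B3 \<le> M" "B4 \<le> M" "B5 \<le> M" "B6 \<le> M" "B7 \<le> M" "B8 \<le> M"
    unfolding M_def using a by linarith+
  have Bv: "\<bar>px (px v2) x s\<bar> \<le> M \<and> \<bar>pt (px v2) x s\<bar> \<le> M \<and> \<bar>px v2 x s\<bar> \<le> M" if "0 \<le> s" for x s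
  proof -
    have "\<bar>px (px v2) x s\<bar> \<le> B1" "\<bar>pt (px v2) x s\<bar> \<le> B2" "\<bar>px v2 x s\<bar> \<le> B3" using B1 B2 B3 that by simp_all
    thus ?thesis using MB by linarith
  qed
  have Bu: "\<bar>px (px u2) x s\<bar> \<le> M \<and> \<bar>pt (px u2) x s\<bar> \<le> M \<and> \<bar>px u2 x s\<bar> \<le> M" if "0 \<le> s" for x s
  proof -
    have "\<bar>px (px u2) x s\<bar> \<le> B4" "\<bar>pt (px u2) x s\<bar> \<le> B5" "\<bar>px u2 x s\<bar> \<le> B6" using B4 B5 B6 that by simp_all
    thus ?thesis using MB by linarith
  qed
  have Bg: "\<bar>px g x s\<bar> \<le> M \<and> \<bar>pt g x s\<bar> \<le> M" if "0 \<le> s" for x s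
  proof -
    have "\<bar>px g x s\<bar> \<le> B7" "\<bar>pt g x s\<bar> \<le> B8" using B7 B8 that by simp_all
    thus ?thesis using MB by linarith
  qed
  have K0: "0 \<le> K"
  proof -
    have "\<bar>v eps0 0 0 - eps0\<^sup>2 * v2 0 0\<bar> \<le> K * eps0 ^ 3" using A1_v eps0 by auto
    hence "0 \<le> K * eps0 ^ 3" by (rule order_trans[OF abs_ge_zero])
    thus ?thesis using eps0 by (simp add: zero_le_mult_iff)
  qed
  define c1 where "c1 = M + K + (K + M) / CFL"
  define c2 where "c2 = 2 * K + 2 * M + (K + M) / CFL"
  define c3 where "c3 = (M + K) / CFL + c2 + 2 * K + M"
  define c4 where "c4 = c3 + (2 * K + M) / CFL"
  define c5 where "c5 = 2 * K + M / CFL + 2 * M + (M + K) + c1"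
  define c6 where "c6 = c5 / (1 - eps0)"
  define c7 where "c7 = (2 * K + 2 * M) / CFL"
  define CF where "CF = c4\<^sup>2 + 2 * (c7 + c6)\<^sup>2 / (1 - eps0)\<^sup>2 + 2 * c6\<^sup>2"
  have CF0: "0 \<le> CF" unfolding CF_def by simp
  show ?thesis
  proof (rule exI[of _ "sqrt CF"], intro allI impI)
    fix \<epsilon> dx dt :: real and N n :: nat and vh :: "real \<Rightarrow> real"
    assume H: "0 < \<epsilon> \<and> \<epsilon> \<le> eps0 \<and> 1 \<le> N \<and> dx = 1 / real N \<and> dt = CFL * dx \<and> \<epsilon> \<le> dt \<and>
           vh \<in> Vh N \<and>
           (\<forall>\<phi>\<in>Vh N. aform \<epsilon> dt vh \<phi> = iota_h \<epsilon> dt dx (v \<epsilon>) (u \<epsilon>) g (real n * dt) \<phi>)"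
    have Sl: "S \<epsilon> dx dt (real n * dt) K M CFL eps0 N (v \<epsilon>) (u \<epsilon>) g v2 u2"
    proof (unfold_locales)
      show "0 < \<epsilon>" "\<epsilon> \<le> eps0" "eps0 < 1" "0 < CFL" "CFL < 1" "1 \<le> N" "dx = 1 / real N" "dt = CFL * dx" "\<epsilon> \<le> dt"
        using H eps0 CFL by auto
      have dtp: "0 < dt" using H by linarith
      show "0 \<le> real n * dt" using dtp by simp
      show "smooth2 (v \<epsilon>)" "smooth2 (u \<epsilon>)" using smooth H by auto
      show "smooth2 g" "smooth2 v2" "smooth2 u2" using limits_smooth by auto
      show "\<And>x s. 0 < x \<Longrightarrow> x < 1 \<Longrightarrow> 0 < s \<Longrightarrow> pt (v \<epsilon>) x s = px (u \<epsilon>) x s \<and> pt (u \<epsilon>) x s = px (v \<epsilon>) x s / \<epsilon>\<^sup>2 + g x s"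
      proof -
        fix x s :: real assume xs: "0 < x" "x < 1" "0 < s"
        have "pt (v \<epsilon>) x s - px (u \<epsilon>) x s = 0 \<and> pt (u \<epsilon>) x s - px (v \<epsilon>) x s / \<epsilon>\<^sup>2 = g x s"
          using pde H xs by blast
        thus "pt (v \<epsilon>) x s = px (u \<epsilon>) x s \<and> pt (u \<epsilon>) x s = px (v \<epsilon>) x s / \<epsilon>\<^sup>2 + g x s" by linarith
      qed
      show "\<And>s. 0 \<le> s \<Longrightarrow> v \<epsilon> 0 s = 0 \<and> v \<epsilon> 1 s = 0" using bc H by blast
      show "0 \<le> K" "0 \<le> M" using K0 M0 by auto
      show "\<And>x s. 0 \<le> s \<Longrightarrow> \<bar>px (px v2) x s\<bar> \<le> M \<and> \<bar>pt (px v2) x s\<bar> \<le> M \<and> \<bar>px v2 x s\<bar> \<le> M" by (rule Bv)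
      show "\<And>x s. 0 \<le> s \<Longrightarrow> \<bar>px (px u2) x s\<bar> \<le> M \<and> \<bar>pt (px u2) x s\<bar> \<le> M \<and> \<bar>px u2 x s\<bar> \<le> M" by (rule Bu)
      show "\<And>x s. 0 \<le> s \<Longrightarrow> \<bar>px g x s\<bar> \<le> M \<and> \<bar>pt g x s\<bar> \<le> M" by (rule Bg)
      show "\<And>x s. 0 \<le> s \<Longrightarrow> \<bar>px (v \<epsilon>) x s - \<epsilon>\<^sup>2 * px v2 x s\<bar> \<le> K * \<epsilon> ^ 3" using A1_v H by blast
      show "\<And>x s. 0 \<le> s \<Longrightarrow> \<bar>px (u \<epsilon>) x s - \<epsilon>\<^sup>2 * px u2 x s\<bar> \<le> K * \<epsilon> ^ 3" using A1_u H by blast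
    qed
    have fin: "L2norm01 (\<lambda>x. uh \<epsilon> dt dx (v \<epsilon>) (u \<epsilon>) g (real n * dt) vh x - u \<epsilon> x (real n * dt + dt))
        \<le> sqrt CF * dt\<^sup>2"
      using S.final[OF Sl] H unfolding S.Cf_def[OF Sl] S.c1_def[OF Sl] S.c2_def[OF Sl] S.c3_def[OF Sl]
        S.c4_def[OF Sl] S.c5_def[OF Sl] S.c6_def[OF Sl] S.c7_def[OF Sl]
        CF_def c1_def c2_def c3_def c4_def c5_def c6_def c7_def by blast
    have tq: "real (Suc n) * dt = real n * dt + dt" by (simp add: algebra_simps)
    have "sqrt CF * dt\<^sup>2 \<le> sqrt CF * (dt\<^sup>2 + \<epsilon> ^ 4 / dx\<^sup>2 + \<epsilon>\<^sup>2)"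
      using CF0 by (intro mult_left_mono) auto
    thus "L2norm01 (\<lambda>x. uh \<epsilon> dt dx (v \<epsilon>) (u \<epsilon>) g (real n * dt) vh x - u \<epsilon> x (real (Suc n) * dt))
               \<le> sqrt CF * (dt\<^sup>2 + \<epsilon> ^ 4 / dx\<^sup>2 + \<epsilon>\<^sup>2)"
      using fin unfolding tq by linarith
  qed
qed


end
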